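(* Let $d,M\ge1$, let $\mathcal{X}$ be the set of (represented) graphs with at most $M$ nodes whose node embeddings lie in $\mathbb{R}^d$ with Euclidean norm at most $1$, let $\gamma>0$, and let $p$ be a probability distribution over random graphs $G_\omega$. Define $\phi_{G_\omega}(G)=\exp(-\gamma\,\mathrm{EMD}(G,G_\omega))$ and the kernel $k(G_x,G_y)=\int p(G_\omega)\phi_{G_\omega}(G_x)\phi_{G_\omega}(G_y)\,dG_\omega$. Let $G_{\omega_1},\dots,G_{\omega_R}$ be i.i.d. samples from $p$, let $\tilde{k}(G_x,G_y)=\frac1R\sum_{i=1}^R\phi_{G_{\omega_i}}(G_x)\phi_{G_{\omega_i}}(G_y)$ and $\Delta_R=k-\tilde{k}$. Then for every $\epsilon>0$, $$P\Big\{\sup_{G_x,G_y\in\mathcal{X}}|\Delta_R(G_x,G_y)|\le\epsilon\Big\}\ \ge\ 1-2\Big(1+\frac{16\gamma}{\epsilon}\Big)^{2dM}\exp(-R\epsilon^2/8).$$ Consequently, to guarantee $|\Delta_R(G_x,G_y)|\le\epsilon$ for all $G_x,G_y\in\mathcal{X}$ with probability at least $1-\delta$, it suffices to have $$R=\Omega\Big(\frac{Md}{\epsilon^2}\log\big(1+\frac{16\gamma}{\epsilon}\big)+\frac{1}{\epsilon^2}\big[\log(\tfrac1\delta)+\mathrm{const}\big]\Big).$$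
   Context: A graph $G$ with $n$ nodes is represented by node embeddings $\{\boldsymbol{u}_i\}_{i=1}^n\subset\mathbb{R}^d$ and a weight vector $\boldsymbol{t}^{(G)}\in\mathbb{R}^n_{\ge0}$ with entries summing to $1$. For graphs $G_x$ (embeddings $\boldsymbol{u}_i$, $n_x$ nodes) and $G_y$ (embeddings $\boldsymbol{v}_j$, $n_y$ nodes), $\mathrm{EMD}(G_x,G_y)=\min\{\langle\mathcal{D},\mathcal{T}\rangle : \mathcal{T}\in\mathbb{R}_{+}^{n_x\times n_y},\ \mathcal{T}\mathbf{1}=\boldsymbol{t}^{(G_x)},\ \mathcal{T}^T\mathbf{1}=\boldsymbol{t}^{(G_y)}\}$ with $\mathcal{D}_{ij}=\|\boldsymbol{u}_i-\boldsymbol{v}_j\|_2$; it is a metric. A random graph $G_\omega$ is a collection of $D\in\{1,\dots,D_{\max}\}$ node embedding vectors $\boldsymbol{w}_1,\dots,\boldsymbol{w}_D\in\mathbb{R}^d$ (with node weights summing to $1$), and $p$ is a probability distribution on the space $\bigcup_{D=1}^{D_{\max}}(\mathbb{R}^d)^D$ of such random graphs. *)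

theory Defs
  imports "HOL-Probability.Probability"
begin

text \<open>A (represented) graph: number of nodes n, node embeddings U i (i < n),
  node weights t i (i < n).  Entries with index \<ge> n are irrelevant.\<close>
type_synonym 'd graph = "nat \<times> (nat \<Rightarrow> real^'d) \<times> (nat \<Rightarrow> real)"

definition nnodes :: "'d graph \<Rightarrow> nat" where "nnodes G = fst G"
definition emb :: "'d graph \<Rightarrow> nat \<Rightarrow> real^'d" where "emb G = fst (snd G)"
definition wts :: "'d graph \<Rightarrow> nat \<Rightarrow> real" where "wts G = snd (snd G)"

definition valid_weights :: "'d graph \<Rightarrow> bool" where
  "valid_weights G \<longleftrightarrow> (\<forall>i<nnodes G. wts G i \<ge> 0) \<and> (\<Sum>i<nnodes G. wts G i) = 1"

definition EMD :: "'d::finite graph \<Rightarrow> 'd graph \<Rightarrow> real" where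
  "EMD Gx Gy = Inf {(\<Sum>i<nnodes Gx. \<Sum>j<nnodes Gy. T i j * dist (emb Gx i) (emb Gy j)) | T.
       (\<forall>i j. T i j \<ge> (0::real)) \<and>
       (\<forall>i<nnodes Gx. (\<Sum>j<nnodes Gy. T i j) = wts Gx i) \<and>
       (\<forall>j<nnodes Gy. (\<Sum>i<nnodes Gx. T i j) = wts Gy j)}"

definition graph_space :: "nat \<Rightarrow> 'd::finite graph set" where
  "graph_space M = {G. 1 \<le> nnodes G \<and> nnodes G \<le> M \<and> valid_weights G \<and>
                        (\<forall>i<nnodes G. norm (emb G i) \<le> 1)}"

definition random_graphs :: "nat \<Rightarrow> 'd::finite graph set" where
  "random_graphs Dmax = {G. 1 \<le> nnodes G \<and> nnodes G \<le> Dmax \<and> valid_weights G}"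

definition rg_space :: "'d::finite graph measure" where
  "rg_space = count_space UNIV \<Otimes>\<^sub>M (PiM UNIV (\<lambda>_. borel) \<Otimes>\<^sub>M PiM UNIV (\<lambda>_. borel))"

definition phi :: "real \<Rightarrow> 'd::finite graph \<Rightarrow> 'd graph \<Rightarrow> real" where
  "phi \<gamma> G\<omega> G = exp (- \<gamma> * EMD G G\<omega>)"

definition kern :: "'d::finite graph measure \<Rightarrow> real \<Rightarrow> 'd graph \<Rightarrow> 'd graph \<Rightarrow> real" where
  "kern p \<gamma> Gx Gy = (\<integral>\<omega>. phi \<gamma> \<omega> Gx * phi \<gamma> \<omega> Gy \<partial>p)"

definition kern_approx :: "nat \<Rightarrow> real \<Rightarrow> (nat \<Rightarrow> 'd::finite graph) \<Rightarrow> 'd graph \<Rightarrow> 'd graph \<Rightarrow> real" where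
  "kern_approx R \<gamma> ws Gx Gy = (1 / real R) * (\<Sum>i<R. phi \<gamma> (ws i) Gx * phi \<gamma> (ws i) Gy)"

end

theory Submission
  imports Defs
begin

definition feas :: "'d::finite graph \<Rightarrow> 'd graph \<Rightarrow> (nat \<Rightarrow> nat \<Rightarrow> real) \<Rightarrow> bool" where
  "feas x y T \<longleftrightarrow> (\<forall>i j. T i j \<ge> 0) \<and> (\<forall>i<nnodes x. (\<Sum>j<nnodes y. T i j) = wts x i) \<and>
      (\<forall>j<nnodes y. (\<Sum>i<nnodes x. T i j) = wts y j)"

definition cost :: "'d::finite graph \<Rightarrow> 'd graph \<Rightarrow> (nat \<Rightarrow> nat \<Rightarrow> real) \<Rightarrow> real" where
  "cost x y T = (\<Sum>i<nnodes x. \<Sum>j<nnodes y. T i j * dist (emb x i) (emb y j))"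

lemma EMD_alt: "EMD x y = Inf (cost x y ` Collect (feas x y))"
  unfolding EMD_def feas_def cost_def by (rule arg_cong[where f=Inf]) auto

lemma cost_nonneg: "feas x y T \<Longrightarrow> cost x y T \<ge> 0"
  unfolding cost_def feas_def by (intro sum_nonneg mult_nonneg_nonneg) auto

lemma bdd_cost: "bdd_below (cost x y ` Collect (feas x y))"
  by (rule bdd_belowI[where m=0]) (auto intro: cost_nonneg)

lemma EMD_le: "feas x y T \<Longrightarrow> EMD x y \<le> cost x y T"
  unfolding EMD_alt by (rule cInf_lower) (auto intro: bdd_cost)

definition prodT :: "'d::finite graph \<Rightarrow> 'd graph \<Rightarrow> nat \<Rightarrow> nat \<Rightarrow> real" where
  "prodT x y i j = (if i < nnodes x \<and> j < nnodes y then wts x i * wts y j else 0)"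

lemma feas_prodT:
  assumes "valid_weights x" "valid_weights y" shows "feas x y (prodT x y)"
  using assms unfolding feas_def prodT_def valid_weights_def
  by (auto simp: sum_distrib_left[symmetric] sum_distrib_right[symmetric])

lemma feas_ne: "valid_weights x \<Longrightarrow> valid_weights y \<Longrightarrow> Collect (feas x y) \<noteq> {}"
  using feas_prodT by blast

lemma EMD_nonneg: "valid_weights x \<Longrightarrow> valid_weights y \<Longrightarrow> EMD x y \<ge> 0"
  unfolding EMD_alt by (rule cInf_greatest) (auto dest: feas_ne intro: cost_nonneg)

lemma EMD_approx:
  assumes "valid_weights x" "valid_weights y" "e > 0"
  shows "\<exists>T. feas x y T \<and> cost x y T < EMD x y + e"
proof -
  have "Inf (cost x y ` Collect (feas x y)) < EMD x y + e" using assms by (simp add: EMD_alt)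
  then obtain c where "c \<in> cost x y ` Collect (feas x y)" "c < EMD x y + e"
    using cInf_lessD feas_ne[OF assms(1,2)] by (metis image_is_empty)
  then show ?thesis by auto
qed

lemma feas_valid:
  assumes "valid_weights x" "feas x y T" shows "valid_weights y"
proof -
  have "(\<Sum>j<nnodes y. wts y j) = (\<Sum>j<nnodes y. \<Sum>i<nnodes x. T i j)"
    using assms(2) unfolding feas_def by auto
  also have "\<dots> = (\<Sum>i<nnodes x. \<Sum>j<nnodes y. T i j)" by (rule sum.swap)
  also have "\<dots> = (\<Sum>i<nnodes x. wts x i)" using assms(2) unfolding feas_def by auto
  also have "\<dots> = 1" using assms(1) unfolding valid_weights_def by auto
  finally have "(\<Sum>j<nnodes y. wts y j) = 1" .
  moreover have "\<forall>j<nnodes y. wts y j \<ge> 0"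
  proof safe
    fix j assume "j < nnodes y"
    then have "wts y j = (\<Sum>i<nnodes x. T i j)" using assms(2) unfolding feas_def by auto
    also have "\<dots> \<ge> 0" using assms(2) unfolding feas_def by (auto intro: sum_nonneg)
    finally show "wts y j \<ge> 0" .
  qed
  ultimately show ?thesis unfolding valid_weights_def by auto
qed

lemma EMD_invalid:
  assumes "valid_weights x" "\<not> valid_weights y" shows "EMD x y = Inf {}"
proof -
  have "Collect (feas x y) = {}" using feas_valid assms by blast
  then show ?thesis unfolding EMD_alt by (metis image_empty)
qed

lemma feas_swap: "feas x y T \<Longrightarrow> feas y x (\<lambda>i j. T j i)"
  unfolding feas_def by auto

lemma cost_swap: "cost y x (\<lambda>i j. T j i) = cost x y T"
  unfolding cost_def by (subst sum.swap) (simp add: dist_commute)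

lemma EMD_sym: "EMD x y = EMD y x"
proof -
  have "cost x y ` Collect (feas x y) = cost y x ` Collect (feas y x)"
  proof (intro equalityI subsetI)
    fix c assume "c \<in> cost x y ` Collect (feas x y)"
    then obtain T where T: "feas x y T" "c = cost x y T" by auto
    then show "c \<in> cost y x ` Collect (feas y x)"
      using feas_swap[OF T(1)] cost_swap[of y x T] by (metis (no_types) image_eqI mem_Collect_eq)
  next
    fix c assume "c \<in> cost y x ` Collect (feas y x)"
    then obtain T where T: "feas y x T" "c = cost y x T" by auto
    then show "c \<in> cost x y ` Collect (feas x y)"
      using feas_swap[OF T(1)] cost_swap[of x y T] by (metis (no_types) image_eqI mem_Collect_eq)
  qed
  then show ?thesis unfolding EMD_alt by simp
qed

lemma sum3_swap: "(\<Sum>k\<in>A. \<Sum>j\<in>B. \<Sum>i\<in>I. h k j i) = (\<Sum>k\<in>A. \<Sum>i\<in>I. \<Sum>j\<in>B. h k j i)"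
  by (rule sum.cong[OF refl], rule sum.swap)

lemma sum3_swap2: "(\<Sum>k\<in>A. \<Sum>j\<in>B. \<Sum>i\<in>I. h k j i) = (\<Sum>i\<in>I. \<Sum>j\<in>B. \<Sum>k\<in>A. h k j i)"
proof -
  have "(\<Sum>k\<in>A. \<Sum>j\<in>B. \<Sum>i\<in>I. h k j i) = (\<Sum>j\<in>B. \<Sum>k\<in>A. \<Sum>i\<in>I. h k j i)" by (rule sum.swap)
  also have "\<dots> = (\<Sum>j\<in>B. \<Sum>i\<in>I. \<Sum>k\<in>A. h k j i)" by (rule sum.cong[OF refl], rule sum.swap)
  also have "\<dots> = (\<Sum>i\<in>I. \<Sum>j\<in>B. \<Sum>k\<in>A. h k j i)" by (rule sum.swap)
  finally show ?thesis .
qed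

lemma glue_feas_cost:
  assumes va: "valid_weights a" and vb: "valid_weights b" and vc: "valid_weights c"
    and C: "feas a b C" and T: "feas b c T"
  shows "\<exists>G. feas a c G \<and> cost a c G \<le> cost a b C + cost b c T"
proof -
  define q where "q i = (if wts b i > 0 then 1 / wts b i else 0)" for i
  let ?na = "nnodes a" and ?nb = "nnodes b" and ?nc = "nnodes c"
  have wb: "wts b i \<ge> 0" if "i < ?nb" for i using vb that unfolding valid_weights_def by auto
  have Cnn: "C k i \<ge> 0" for k i using C unfolding feas_def by auto
  have Tnn: "T i j \<ge> 0" for i j using T unfolding feas_def by auto
  have qnn: "q i \<ge> 0" for i unfolding q_def by auto
  have Ccol: "(\<Sum>k<?na. C k i) = wts b i" if "i < ?nb" for i using C that unfolding feas_def by auto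
  have Trow: "(\<Sum>j<?nc. T i j) = wts b i" if "i < ?nb" for i using T that unfolding feas_def by auto
  have Crow: "(\<Sum>i<?nb. C k i) = wts a k" if "k < ?na" for k using C that unfolding feas_def by auto
  have Tcol: "(\<Sum>i<?nb. T i j) = wts c j" if "j < ?nc" for j using T that unfolding feas_def by auto
  have Cq: "C k i * (q i * wts b i) = C k i" if "i < ?nb" "k < ?na" for i k
  proof (cases "wts b i > 0")
    case True then show ?thesis unfolding q_def by simp
  next
    case False
    then have "wts b i = 0" using wb[OF that(1)] by auto
    then have "(\<Sum>k<?na. C k i) = 0" using Ccol[OF that(1)] by simp
    then have "C k i = 0" using that(2) Cnn by (subst (asm) sum_nonneg_eq_0_iff) auto
    then show ?thesis by simp
  qed
  have Tq: "T i j * (q i * wts b i) = T i j" if "i < ?nb" "j < ?nc" for i j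
  proof (cases "wts b i > 0")
    case True then show ?thesis unfolding q_def by simp
  next
    case False
    then have "wts b i = 0" using wb[OF that(1)] by auto
    then have "(\<Sum>j<?nc. T i j) = 0" using Trow[OF that(1)] by simp
    then have "T i j = 0" using that(2) Tnn by (subst (asm) sum_nonneg_eq_0_iff) auto
    then show ?thesis by simp
  qed
  define G where "G k j = (\<Sum>i<?nb. C k i * T i j * q i)" for k j
  have "feas a c G"
    unfolding feas_def
  proof (intro conjI allI impI)
    fix k j show "G k j \<ge> 0" unfolding G_def using Cnn Tnn qnn by (intro sum_nonneg mult_nonneg_nonneg) auto
  next
    fix k assume k: "k < ?na"
    have "(\<Sum>j<?nc. G k j) = (\<Sum>i<?nb. \<Sum>j<?nc. C k i * T i j * q i)"
      unfolding G_def by (rule sum.swap)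
    also have "\<dots> = (\<Sum>i<?nb. C k i * q i * (\<Sum>j<?nc. T i j))"
      by (simp add: sum_distrib_left mult_ac)
    also have "\<dots> = (\<Sum>i<?nb. C k i)"
      using Trow Cq k by (intro sum.cong refl) (simp add: mult_ac)
    also have "\<dots> = wts a k" using Crow k by simp
    finally show "(\<Sum>j<?nc. G k j) = wts a k" .
  next
    fix j assume j: "j < ?nc"
    have "(\<Sum>k<?na. G k j) = (\<Sum>i<?nb. \<Sum>k<?na. C k i * T i j * q i)"
      unfolding G_def by (rule sum.swap)
    also have "\<dots> = (\<Sum>i<?nb. T i j * q i * (\<Sum>k<?na. C k i))"
      by (simp add: sum_distrib_left mult_ac)
    also have "\<dots> = (\<Sum>i<?nb. T i j)"
      using Ccol Tq j by (intro sum.cong refl) (simp add: mult_ac)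
    also have "\<dots> = wts c j" using Tcol j by simp
    finally show "(\<Sum>k<?na. G k j) = wts c j" .
  qed
  moreover have "cost a c G \<le> cost a b C + cost b c T"
  proof -
    let ?h = "\<lambda>k j i. C k i * T i j * q i"
    have "cost a c G = (\<Sum>k<?na. \<Sum>j<?nc. \<Sum>i<?nb. ?h k j i * dist (emb a k) (emb c j))"
      unfolding cost_def G_def by (simp add: sum_distrib_right)
    also have "\<dots> \<le> (\<Sum>k<?na. \<Sum>j<?nc. \<Sum>i<?nb. ?h k j i * dist (emb a k) (emb b i)
                   + ?h k j i * dist (emb b i) (emb c j))"
      using Cnn Tnn qnn
      by (intro sum_mono) (simp add: distrib_left[symmetric] dist_triangle mult_left_mono)
    also have "\<dots> = (\<Sum>k<?na. \<Sum>j<?nc. \<Sum>i<?nb. ?h k j i * dist (emb a k) (emb b i))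
                 + (\<Sum>k<?na. \<Sum>j<?nc. \<Sum>i<?nb. ?h k j i * dist (emb b i) (emb c j))"
      by (simp add: sum.distrib)
    also have "(\<Sum>k<?na. \<Sum>j<?nc. \<Sum>i<?nb. ?h k j i * dist (emb a k) (emb b i)) = cost a b C"
    proof -
      have "(\<Sum>k<?na. \<Sum>j<?nc. \<Sum>i<?nb. ?h k j i * dist (emb a k) (emb b i))
          = (\<Sum>k<?na. \<Sum>i<?nb. \<Sum>j<?nc. ?h k j i * dist (emb a k) (emb b i))" by (rule sum3_swap)
      also have "\<dots> = (\<Sum>k<?na. \<Sum>i<?nb. C k i * q i * dist (emb a k) (emb b i) * (\<Sum>j<?nc. T i j))"
        by (simp add: sum_distrib_left sum_distrib_right mult_ac)
      also have "\<dots> = (\<Sum>k<?na. \<Sum>i<?nb. C k i * dist (emb a k) (emb b i))"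
      proof (intro sum.cong refl)
        fix k i assume ki: "k \<in> {..<?na}" "i \<in> {..<?nb}"
        then have "C k i * q i * dist (emb a k) (emb b i) * (\<Sum>j<?nc. T i j)
             = (C k i * (q i * wts b i)) * dist (emb a k) (emb b i)" using Trow by (simp add: mult_ac)
        also have "\<dots> = C k i * dist (emb a k) (emb b i)" using Cq ki by simp
        finally show "C k i * q i * dist (emb a k) (emb b i) * (\<Sum>j<?nc. T i j) = C k i * dist (emb a k) (emb b i)" .
      qed
      finally show ?thesis unfolding cost_def .
    qed
    also have "(\<Sum>k<?na. \<Sum>j<?nc. \<Sum>i<?nb. ?h k j i * dist (emb b i) (emb c j)) = cost b c T"
    proof -
      have "(\<Sum>k<?na. \<Sum>j<?nc. \<Sum>i<?nb. ?h k j i * dist (emb b i) (emb c j))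
          = (\<Sum>i<?nb. \<Sum>j<?nc. \<Sum>k<?na. ?h k j i * dist (emb b i) (emb c j))" by (rule sum3_swap2)
      also have "\<dots> = (\<Sum>i<?nb. \<Sum>j<?nc. T i j * q i * dist (emb b i) (emb c j) * (\<Sum>k<?na. C k i))"
        by (simp add: sum_distrib_left sum_distrib_right mult_ac)
      also have "\<dots> = (\<Sum>i<?nb. \<Sum>j<?nc. T i j * dist (emb b i) (emb c j))"
      proof (intro sum.cong refl)
        fix i j assume ij: "i \<in> {..<?nb}" "j \<in> {..<?nc}"
        then have "T i j * q i * dist (emb b i) (emb c j) * (\<Sum>k<?na. C k i)
             = (T i j * (q i * wts b i)) * dist (emb b i) (emb c j)" using Ccol by (simp add: mult_ac)
        also have "\<dots> = T i j * dist (emb b i) (emb c j)" using Tq ij by simp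
        finally show "T i j * q i * dist (emb b i) (emb c j) * (\<Sum>k<?na. C k i) = T i j * dist (emb b i) (emb c j)" .
      qed
      finally show ?thesis unfolding cost_def .
    qed
    finally show ?thesis .
  qed
  ultimately show ?thesis by blast
qed

lemma EMD_triangle:
  assumes va: "valid_weights a" and vb: "valid_weights b" and vc: "valid_weights c"
  shows "EMD a c \<le> EMD a b + EMD b c"
proof (rule field_le_epsilon)
  fix e :: real assume e: "e > 0"
  obtain C where C: "feas a b C" "cost a b C < EMD a b + e/2" using EMD_approx[OF va vb, of "e/2"] e by auto
  obtain T where T: "feas b c T" "cost b c T < EMD b c + e/2" using EMD_approx[OF vb vc, of "e/2"] e by auto
  obtain G where G: "feas a c G" "cost a c G \<le> cost a b C + cost b c T"
    using glue_feas_cost[OF va vb vc C(1) T(1)] by blast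
  have "EMD a c \<le> cost a c G" by (rule EMD_le[OF G(1)])
  then show "EMD a c \<le> EMD a b + EMD b c + e" using G(2) C(2) T(2) by linarith
qed

lemma EMD_lip:
  assumes "valid_weights x" "valid_weights x'"
  shows "\<bar>EMD x w - EMD x' w\<bar> \<le> EMD x x'"
proof (cases "valid_weights w")
  case True
  have "EMD x w \<le> EMD x x' + EMD x' w" by (rule EMD_triangle[OF assms True])
  moreover have "EMD x' w \<le> EMD x' x + EMD x w" by (rule EMD_triangle[OF assms(2,1) True])
  ultimately show ?thesis using EMD_sym[of x x'] by linarith
next
  case False
  then show ?thesis using EMD_invalid[OF assms(1) False] EMD_invalid[OF assms(2) False] EMD_nonneg[OF assms] by simp
qed

lemma same_n_bound:
  assumes vx: "valid_weights x" and vy: "valid_weights y" and nn: "nnodes y = nnodes x"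
    and Dm: "\<And>i j. i < nnodes x \<Longrightarrow> j < nnodes x \<Longrightarrow> dist (emb x i) (emb y j) \<le> D"
  shows "EMD x y \<le> (\<Sum>i<nnodes x. min (wts x i) (wts y i) * dist (emb x i) (emb y i))
                    + D * (\<Sum>i<nnodes x. \<bar>wts x i - wts y i\<bar>)"
proof -
  let ?n = "nnodes x"
  define a where "a i = min (wts x i) (wts y i)" for i
  define e where "e i = wts x i - a i" for i
  define f where "f i = wts y i - a i" for i
  define \<delta> where "\<delta> = (\<Sum>i<?n. e i)"
  have tx: "wts x i \<ge> 0" if "i < ?n" for i using vx that unfolding valid_weights_def by auto
  have ty: "wts y i \<ge> 0" if "i < ?n" for i using vy nn that unfolding valid_weights_def by auto
  have sx: "(\<Sum>i<?n. wts x i) = 1" using vx unfolding valid_weights_def by auto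
  have sy: "(\<Sum>i<?n. wts y i) = 1" using vy nn unfolding valid_weights_def by auto
  have ann: "a i \<ge> 0" if "i < ?n" for i using tx ty that unfolding a_def by auto
  have enn: "e i \<ge> 0" for i unfolding e_def a_def by auto
  have fnn: "f i \<ge> 0" for i unfolding f_def a_def by auto
  have dnn: "\<delta> \<ge> 0" unfolding \<delta>_def using enn by (intro sum_nonneg) auto
  have sf: "(\<Sum>i<?n. f i) = \<delta>"
  proof -
    have "(\<Sum>i<?n. f i) = 1 - (\<Sum>i<?n. a i)" unfolding f_def using sy by (simp add: sum_subtractf)
    also have "\<dots> = (\<Sum>i<?n. e i)" unfolding e_def using sx by (simp add: sum_subtractf)
    finally show ?thesis unfolding \<delta>_def .
  qed
  have e0: "\<delta> = 0 \<Longrightarrow> i < ?n \<Longrightarrow> e i = 0" for i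
    using enn unfolding \<delta>_def by (subst (asm) sum_nonneg_eq_0_iff) auto
  have f0: "\<delta> = 0 \<Longrightarrow> i < ?n \<Longrightarrow> f i = 0" for i
    using fnn sf sum_nonneg_eq_0_iff[of "{..<?n}" f] by auto
  have Dnn: "D \<ge> 0"
  proof -
    have "?n > 0" using sx by (metis lessThan_0 less_nat_zero_code neq0_conv sum.empty zero_neq_one)
    then show ?thesis using Dm[of 0 0] zero_le_dist[of "emb x 0" "emb y 0"] by linarith
  qed
  define C where "C i j = (if i < ?n \<and> j < ?n then (if i = j then a i else 0) + e i * f j / \<delta> else 0)" for i j
  have feasC: "feas x y C"
    unfolding feas_def nn
  proof (intro conjI allI impI)
    fix i j show "C i j \<ge> 0" unfolding C_def using ann enn fnn dnn by auto
  next
    fix i assume i: "i < ?n"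
    have "(\<Sum>j<?n. C i j) = (\<Sum>j<?n. (if i = j then a i else 0)) + (\<Sum>j<?n. e i * f j / \<delta>)"
      unfolding C_def using i by (simp add: sum.distrib)
    also have "\<dots> = a i + e i * (\<Sum>j<?n. f j) / \<delta>" using i by (simp add: sum_divide_distrib sum_distrib_left)
    also have "\<dots> = wts x i"
    proof (cases "\<delta> = 0")
      case True then show ?thesis using e0[OF True i] unfolding e_def by simp
    next
      case False then show ?thesis using sf unfolding e_def by simp
    qed
    finally show "(\<Sum>j<?n. C i j) = wts x i" .
  next
    fix j assume j: "j < ?n"
    have "(\<Sum>i<?n. C i j) = (\<Sum>i<?n. (if i = j then a i else 0)) + (\<Sum>i<?n. e i * f j / \<delta>)"
      unfolding C_def using j by (simp add: sum.distrib)
    also have "\<dots> = a j + f j * (\<Sum>i<?n. e i) / \<delta>" using j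
      by (simp add: sum_divide_distrib sum_distrib_left sum_distrib_right mult.commute)
    also have "\<dots> = wts y j"
    proof (cases "\<delta> = 0")
      case True then show ?thesis using f0[OF True j] unfolding f_def by simp
    next
      case False then show ?thesis unfolding f_def \<delta>_def by simp
    qed
    finally show "(\<Sum>i<?n. C i j) = wts y j" .
  qed
  have "cost x y C = (\<Sum>i<?n. \<Sum>j<?n. (if i = j then a i else 0) * dist (emb x i) (emb y j))
       + (\<Sum>i<?n. \<Sum>j<?n. e i * f j / \<delta> * dist (emb x i) (emb y j))"
    unfolding cost_def nn C_def by (simp add: sum.distrib distrib_right)
  also have "(\<Sum>i<?n. \<Sum>j<?n. (if i = j then a i else 0) * dist (emb x i) (emb y j))
      = (\<Sum>i<?n. a i * dist (emb x i) (emb y i))"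
  proof (intro sum.cong refl)
    fix i assume "i \<in> {..<?n}"
    have "(\<Sum>j<?n. (if i = j then a i else 0) * dist (emb x i) (emb y j))
        = (\<Sum>j<?n. (if i = j then a i * dist (emb x i) (emb y j) else 0))"
      by (intro sum.cong refl) auto
    also have "\<dots> = a i * dist (emb x i) (emb y i)" using \<open>i \<in> {..<?n}\<close> by (simp add: sum.delta)
    finally show "(\<Sum>j<?n. (if i = j then a i else 0) * dist (emb x i) (emb y j)) = a i * dist (emb x i) (emb y i)" .
  qed
  also have "(\<Sum>i<?n. \<Sum>j<?n. e i * f j / \<delta> * dist (emb x i) (emb y j))
      \<le> (\<Sum>i<?n. \<Sum>j<?n. e i * f j / \<delta> * D)"
    using Dm enn fnn dnn by (intro sum_mono mult_left_mono) auto
  also have "(\<Sum>i<?n. \<Sum>j<?n. e i * f j / \<delta> * D) = D * (\<Sum>i<?n. e i) * (\<Sum>j<?n. f j) / \<delta>"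
    by (simp add: sum_distrib_left sum_distrib_right sum_divide_distrib mult_ac)
  also have "\<dots> = D * \<delta> * \<delta> / \<delta>" using sf unfolding \<delta>_def by simp
  also have "\<dots> \<le> D * (\<Sum>i<?n. \<bar>wts x i - wts y i\<bar>)"
  proof (cases "\<delta> = 0")
    case True then show ?thesis using Dnn by (simp add: sum_nonneg)
  next
    case False
    have "\<delta> \<le> (\<Sum>i<?n. \<bar>wts x i - wts y i\<bar>)" unfolding \<delta>_def e_def a_def by (intro sum_mono) auto
    moreover note Dnn
    ultimately show ?thesis using False by (simp add: mult_left_mono)
  qed
  finally have "cost x y C \<le> (\<Sum>i<?n. a i * dist (emb x i) (emb y i)) + D * (\<Sum>i<?n. \<bar>wts x i - wts y i\<bar>)"
    by linarith
  then show ?thesis using EMD_le[OF feasC] unfolding a_def by linarith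
qed

lemma ball_fin: "emeasure lborel (ball (c::'a::euclidean_space) r) \<noteq> \<infinity>"
  using emeasure_lborel_ball_finite[of c r] by (simp add: less_top)

lemma ball_fmeas: "ball (c::'a::euclidean_space) r \<in> fmeasurable lborel"
  by (rule fmeasurableI[OF _ emeasure_lborel_ball_finite]) simp

lemma packing_card:
  fixes S :: "('a::euclidean_space) set" and r :: real
  assumes r: "r > 0" and fin: "finite S" and sub: "S \<subseteq> cball 0 1"
    and sep: "\<And>a b. a \<in> S \<Longrightarrow> b \<in> S \<Longrightarrow> a \<noteq> b \<Longrightarrow> r \<le> dist a b"
  shows "real (card S) \<le> (1 + 2 / r) ^ DIM('a)"
proof -
  let ?B = "\<lambda>s. ball s (r/2)"
  let ?c = "measure lborel (ball (0::'a) 1)"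
  have cpos: "?c > 0" using content_ball_pos[of 1 "0::'a"] by simp
  have disj: "disjoint_family_on ?B S"
    unfolding disjoint_family_on_def
  proof (intro ballI impI)
    fix a b assume ab: "a \<in> S" "b \<in> S" "a \<noteq> b"
    show "?B a \<inter> ?B b = {}"
    proof (rule ccontr)
      assume "?B a \<inter> ?B b \<noteq> {}"
      then obtain x where "dist a x < r/2" "dist b x < r/2" by auto
      then have "dist a b < r" using dist_triangle_half_r[of x a r b] by (simp add: dist_commute)
      then show False using sep[OF ab] by simp
    qed
  qed
  have "measure lborel (\<Union>s\<in>S. ?B s) = (\<Sum>s\<in>S. measure lborel (?B s))"
    using fin disj ball_fin by (intro measure_finite_Union) auto
  also have "\<dots> = (\<Sum>s\<in>S. (r/2) ^ DIM('a) * ?c)"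
    using r by (intro sum.cong refl content_ball_conv_unit_ball) simp
  also have "\<dots> = real (card S) * ((r/2) ^ DIM('a) * ?c)" by simp
  finally have eq: "measure lborel (\<Union>s\<in>S. ?B s) = real (card S) * ((r/2) ^ DIM('a) * ?c)" .
  have "(\<Union>s\<in>S. ?B s) \<subseteq> ball 0 (1 + r/2)"
  proof
    fix x assume "x \<in> (\<Union>s\<in>S. ?B s)"
    then obtain s where s: "s \<in> S" "dist s x < r/2" by auto
    have "norm s \<le> 1" using sub s(1) by auto
    then have "norm x < 1 + r/2" using s(2) norm_triangle_ineq[of s "x - s"]
      by (simp add: dist_norm norm_minus_commute)
    then show "x \<in> ball 0 (1 + r/2)" by simp
  qed
  then have "measure lborel (\<Union>s\<in>S. ?B s) \<le> measure lborel (ball (0::'a) (1 + r/2))"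
    using fin by (intro measure_mono_fmeasurable ball_fmeas) (auto intro!: borel_open open_UN)
  also have "\<dots> = (1 + r/2) ^ DIM('a) * ?c" using r by (intro content_ball_conv_unit_ball) simp
  finally have "real (card S) * (r/2) ^ DIM('a) \<le> (1 + r/2) ^ DIM('a)"
    using eq cpos by (simp add: mult.assoc[symmetric])
  then have "real (card S) \<le> (1 + r/2) ^ DIM('a) / (r/2) ^ DIM('a)"
    using r by (subst pos_le_divide_eq) auto
  also have "\<dots> = ((1 + r/2) / (r/2)) ^ DIM('a)" by (rule power_divide[symmetric])
  also have "(1 + r/2) / (r/2) = 1 + 2 / r" using r by (simp add: field_simps)
  finally show ?thesis .
qed

lemma ball_net:
  fixes r :: real assumes r: "r > 0"
  shows "\<exists>P::('a::euclidean_space) set. finite P \<and> P \<subseteq> cball 0 1 \<and> real (card P) \<le> (1 + 2 / r) ^ DIM('a)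
          \<and> (\<forall>u\<in>cball 0 1. \<exists>p\<in>P. dist u p < r)"
proof -
  define fam where "fam = {S::'a set. finite S \<and> S \<subseteq> cball 0 1 \<and> (\<forall>a\<in>S. \<forall>b\<in>S. a \<noteq> b \<longrightarrow> r \<le> dist a b)}"
  define N where "N = nat \<lceil>(1 + 2 / r) ^ DIM('a)\<rceil>"
  have bnd: "card S \<le> N" if "S \<in> fam" for S
  proof -
    have "real (card S) \<le> (1 + 2 / r) ^ DIM('a)"
      using that unfolding fam_def by (intro packing_card[OF r]) auto
    then show ?thesis unfolding N_def by linarith
  qed
  have "{} \<in> fam" unfolding fam_def by auto
  then obtain S where S: "S \<in> fam" and maxS: "\<And>S'. S' \<in> fam \<Longrightarrow> card S' \<le> card S"
    using ex_has_greatest_nat[of "\<lambda>S. S \<in> fam" "{}" card "N + 1"] bnd by force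
  have cover: "\<exists>p\<in>S. dist u p < r" if u: "u \<in> cball 0 1" for u
  proof (rule ccontr)
    assume "\<not> (\<exists>p\<in>S. dist u p < r)"
    then have far: "\<forall>p\<in>S. r \<le> dist u p" by auto
    then have uS: "u \<notin> S" using r by fastforce
    have "insert u S \<in> fam" using S u far unfolding fam_def by (auto simp: dist_commute)
    then have "card (insert u S) \<le> card S" by (rule maxS)
    moreover have "card (insert u S) = card S + 1" using S uS unfolding fam_def by auto
    ultimately show False by simp
  qed
  have "real (card S) \<le> (1 + 2 / r) ^ DIM('a)"
    using S unfolding fam_def by (intro packing_card[OF r]) auto
  then show ?thesis
    using S cover unfolding fam_def by (intro exI[of _ S]) auto
qed

lemma pow_le_fact: "real n ^ n \<le> 3 ^ n * fact n"
proof -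
  have s: "(\<lambda>k. real n ^ k / fact k) sums exp (real n)"
    using exp_converges[of "real n"] by (simp add: divide_inverse mult.commute)
  have "(\<Sum>k\<in>{n}. real n ^ k / fact k) \<le> (\<Sum>k. real n ^ k / fact k)"
    by (rule sum_le_suminf) (use s in \<open>auto simp: sums_iff\<close>)
  then have "real n ^ n / fact n \<le> exp (real n)" using s by (simp add: sums_iff)
  also have "exp (real n) = exp 1 ^ n" using exp_of_nat_mult[of n 1] by simp
  also have "\<dots> \<le> 3 ^ n" by (rule power_mono[OF exp_le]) simp
  finally show ?thesis by (simp add: divide_le_eq)
qed

lemma choose_bound:
  assumes "n \<le> m" "n \<ge> 1"
  shows "real (m choose n) \<le> (3 * real m / real n) ^ n"
proof -
  have dv: "fact (m - n) dvd (fact m :: nat)" by (rule fact_dvd) simp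
  have "real (m choose n) = fact m / (fact n * fact (m - n))" by (rule binomial_fact[OF assms(1)])
  also have "\<dots> = (fact m / fact (m - n)) / fact n" by (simp add: field_simps)
  also have "fact m / fact (m - n) = real (fact m div fact (m - n))"
    using real_of_nat_div[OF dv] by simp
  also have "\<dots> \<le> real m ^ n" using fact_div_fact_le_pow[OF assms(1)] by (metis of_nat_le_iff of_nat_power)
  finally have c: "real (m choose n) \<le> real m ^ n / fact n" by (simp add: divide_right_mono)
  have np: "real n ^ n > 0" using assms by simp
  have "real m ^ n / fact n \<le> real m ^ n * 3 ^ n / real n ^ n"
  proof -
    have "real m ^ n * real n ^ n \<le> real m ^ n * (3 ^ n * fact n)"
      by (rule mult_left_mono[OF pow_le_fact]) simp
    then show ?thesis using np by (simp add: field_simps)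
  qed
  also have "\<dots> = (3 * real m / real n) ^ n" by (simp add: power_divide power_mult_distrib mult.commute)
  finally show ?thesis using c by linarith
qed

lemma comp_set_eq:
  "{ks::nat list. length ks = n \<and> sum_list ks \<le> q} = (\<Union>N\<in>{..q}. {ks. length ks = n \<and> sum_list ks = N})"
  by auto

lemma comp_fin: "finite {ks::nat list. length ks = n \<and> sum_list ks = N}"
proof (rule finite_subset)
  show "{ks::nat list. length ks = n \<and> sum_list ks = N} \<subseteq> {ks. set ks \<subseteq> {..N} \<and> length ks = n}"
    by (auto simp: member_le_sum_list)
  show "finite {ks. set ks \<subseteq> {..N::nat} \<and> length ks = n}" by (rule finite_lists_length_eq) simp
qed

lemma comp_card:
  assumes "n \<ge> 1"
  shows "card {ks::nat list. length ks = n \<and> sum_list ks \<le> q} = (n + q) choose n"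
    and "finite {ks::nat list. length ks = n \<and> sum_list ks \<le> q}"
proof -
  have "card {ks::nat list. length ks = n \<and> sum_list ks \<le> q}
      = (\<Sum>N\<in>{..q}. card {ks::nat list. length ks = n \<and> sum_list ks = N})"
    unfolding comp_set_eq by (rule card_UN_disjoint) (auto intro: comp_fin)
  also have "\<dots> = (\<Sum>N\<in>{..q}. (n - 1) + N choose N)"
    using assms by (intro sum.cong refl) (simp add: card_length_sum_list add.commute)
  also have "\<dots> = Suc (n - 1 + q) choose q" by (rule sum_choose_lower)
  also have "\<dots> = (n + q) choose q" using assms by simp
  also have "\<dots> = (n + q) choose n" using binomial_symmetric[of q "n + q"] by simp
  finally show "card {ks::nat list. length ks = n \<and> sum_list ks \<le> q} = (n + q) choose n" .
  show "finite {ks::nat list. length ks = n \<and> sum_list ks \<le> q}"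
    unfolding comp_set_eq by (auto intro: comp_fin)
qed

lemma floor_eq_close:
  fixes a b :: real assumes "\<lfloor>a\<rfloor> = \<lfloor>b\<rfloor>" shows "\<bar>a - b\<bar> < 1"
  using assms by linarith

lemma graph_net:
  fixes r :: real and M :: nat
  assumes r: "r > 0"
  shows "\<exists>N::('d::finite graph) set. finite N \<and> N \<subseteq> graph_space M \<and>
     (\<forall>x\<in>graph_space M. \<exists>y\<in>N. EMD x y \<le> r) \<and>
     real (card N) \<le> (\<Sum>n\<in>{1..M}. ((1 + 8 / r) ^ CARD('d) * (3 * (4 / r + 2))) ^ n)"
proof -
  have r4: "r / 4 > 0" using r by simp
  obtain P :: "(real^'d) set" where P: "finite P" "P \<subseteq> cball 0 1"
    "real (card P) \<le> (1 + 2 / (r/4)) ^ DIM(real^'d)" and Pc: "\<forall>u\<in>cball 0 1. \<exists>p\<in>P. dist u p < r/4"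
    using ball_net[OF r4] by blast
  have cardP: "real (card P) \<le> (1 + 8 / r) ^ CARD('d)" using P(3) by simp
  define near where "near u = (SOME p. p \<in> P \<and> dist u p < r/4)" for u :: "real^'d"
  have near: "near u \<in> P \<and> dist u (near u) < r/4" if "norm u \<le> 1" for u
    unfolding near_def by (rule someI_ex) (use Pc that in auto)
  define qq where "qq n = nat \<lceil>4 * real n / r\<rceil>" for n :: nat
  define key where "key x = (map (\<lambda>i. near (emb x i)) [0..<nnodes x],
       map (\<lambda>i. nat \<lfloor>real (qq (nnodes x)) * wts x i\<rfloor>) [0..<nnodes x])" for x :: "'d graph"
  define X where "X = (graph_space M :: 'd graph set)"
  define KS where "KS = (\<Union>n\<in>{1..M}. {ps. set ps \<subseteq> P \<and> length ps = n} \<times> {ks::nat list. length ks = n \<and> sum_list ks \<le> qq n})"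
  have keyKS: "key x \<in> KS" if "x \<in> X" for x
  proof -
    let ?n = "nnodes x"
    have x: "1 \<le> ?n" "?n \<le> M" "valid_weights x" "\<forall>i<?n. norm (emb x i) \<le> 1"
      using that unfolding X_def graph_space_def by auto
    have t0: "wts x i \<ge> 0" if "i < ?n" for i using x(3) that unfolding valid_weights_def by auto
    have "real (sum_list (map (\<lambda>i. nat \<lfloor>real (qq ?n) * wts x i\<rfloor>) [0..<?n]))
        = (\<Sum>i<?n. real (nat \<lfloor>real (qq ?n) * wts x i\<rfloor>))"
      by (simp add: interv_sum_list_conv_sum_set_nat atLeast0LessThan)
    also have "\<dots> \<le> (\<Sum>i<?n. real (qq ?n) * wts x i)"
      using t0 by (intro sum_mono) auto
    also have "\<dots> = real (qq ?n)" using x(3) unfolding valid_weights_def by (simp add: sum_distrib_left[symmetric])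
    finally have "sum_list (map (\<lambda>i. nat \<lfloor>real (qq ?n) * wts x i\<rfloor>) [0..<?n]) \<le> qq ?n" by linarith
    then show ?thesis unfolding KS_def key_def using x near by (auto intro!: bexI[of _ ?n])
  qed
  have finKS: "finite KS" unfolding KS_def
    using P(1) comp_card(2) by (auto intro!: finite_cartesian_product finite_lists_length_eq)
  have cardKS: "real (card KS) \<le> (\<Sum>n\<in>{1..M}. ((1 + 8 / r) ^ CARD('d) * (3 * (4 / r + 2))) ^ n)"
  proof -
    have "card KS \<le> (\<Sum>n\<in>{1..M}. card ({ps. set ps \<subseteq> P \<and> length ps = n} \<times> {ks::nat list. length ks = n \<and> sum_list ks \<le> qq n}))"
      unfolding KS_def by (rule card_UN_le) simp
    also have "\<dots> = (\<Sum>n\<in>{1..M}. card P ^ n * ((n + qq n) choose n))"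
      by (intro sum.cong refl) (simp add: card_cartesian_product card_lists_length_eq P(1) comp_card(1))
    finally have "real (card KS) \<le> (\<Sum>n\<in>{1..M}. real (card P) ^ n * real ((n + qq n) choose n))"
      by (metis (mono_tags, lifting) of_nat_le_iff of_nat_mult of_nat_power of_nat_sum sum.cong)
    also have "\<dots> \<le> (\<Sum>n\<in>{1..M}. ((1 + 8 / r) ^ CARD('d) * (3 * (4 / r + 2))) ^ n)"
    proof (intro sum_mono)
      fix n assume n: "n \<in> {1..M}"
      have qqb: "real (qq n) \<le> 4 * real n / r + 1"
      proof -
        have "0 \<le> 4 * real n / r" using r by simp
        then have "real (qq n) = of_int \<lceil>4 * real n / r\<rceil>" unfolding qq_def by simp
        then show ?thesis using of_int_ceiling_le_add_one[of "4 * real n / r"] by linarith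
      qed
      have "real ((n + qq n) choose n) \<le> (3 * real (n + qq n) / real n) ^ n"
        using n by (intro choose_bound) auto
      also have "\<dots> \<le> (3 * (4 / r + 2)) ^ n"
      proof (rule power_mono)
        have "real (n + qq n) \<le> real n * (4 / r + 2)"
        proof -
          have h1: "r \<le> r * real n" using n r by simp
          have h2: "r * real (qq n) \<le> r + real n * 4" using qqb r by (simp add: field_simps)
          have "r * real (qq n) \<le> r * real n + real n * 4" using h1 h2 by linarith
          then show ?thesis using r by (simp add: field_simps)
        qed
        then have "3 * real (n + qq n) \<le> 3 * (real n * (4 / r + 2))" by (rule mult_left_mono) simp
        also have "3 * (real n * (4 / r + 2)) = (3 * (4 / r + 2)) * real n" by (simp only: mult_ac)
        finally have "3 * real (n + qq n) \<le> (3 * (4 / r + 2)) * real n" .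
        then show "3 * real (n + qq n) / real n \<le> 3 * (4 / r + 2)"
          using n by (subst divide_le_eq) auto
      qed simp
      finally have c2: "real ((n + qq n) choose n) \<le> (3 * (4 / r + 2)) ^ n" .
      have c1: "real (card P) ^ n \<le> ((1 + 8 / r) ^ CARD('d)) ^ n" by (rule power_mono[OF cardP]) simp
      have "real (card P) ^ n * real ((n + qq n) choose n) \<le> ((1 + 8 / r) ^ CARD('d)) ^ n * (3 * (4 / r + 2)) ^ n"
        by (rule mult_mono[OF c1 c2]) (use r in auto)
      then show "real (card P) ^ n * real ((n + qq n) choose n) \<le> ((1 + 8 / r) ^ CARD('d) * (3 * (4 / r + 2))) ^ n"
        by (simp add: power_mult_distrib)
    qed
    finally show ?thesis .
  qed
  define ch where "ch k = (SOME x. x \<in> X \<and> key x = k)" for k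
  define N where "N = ch ` key ` X"
  have chX: "ch (key x) \<in> X \<and> key (ch (key x)) = key x" if "x \<in> X" for x
    unfolding ch_def by (rule someI_ex[of "\<lambda>y. y \<in> X \<and> key y = key x"]) (use that in blast)
  have close: "EMD x y \<le> r" if xy: "x \<in> X" "y \<in> X" "key y = key x" for x y
  proof -
    let ?n = "nnodes x"
    have "length (fst (key y)) = length (fst (key x))" using xy(3) by simp
    then have nn: "nnodes y = ?n" unfolding key_def by simp
    have x: "1 \<le> ?n" "valid_weights x" "\<forall>i<?n. norm (emb x i) \<le> 1"
      using xy(1) unfolding X_def graph_space_def by auto
    have y: "valid_weights y" "\<forall>i<?n. norm (emb y i) \<le> 1"
      using xy(2) nn unfolding X_def graph_space_def by auto
    have tx: "wts x i \<ge> 0" if "i < ?n" for i using x(2) that unfolding valid_weights_def by auto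
    have ty: "wts y i \<ge> 0" if "i < ?n" for i using y(1) nn that unfolding valid_weights_def by auto
    have qpos: "real (qq ?n) \<ge> 4 * real ?n / r" unfolding qq_def by linarith
    have "4 * real ?n / r > 0" using x(1) r by simp
    then have qp: "real (qq ?n) > 0" using qpos by linarith
    have emb_eq: "near (emb y i) = near (emb x i)" if "i < ?n" for i
    proof -
      have "fst (key y) ! i = fst (key x) ! i" using xy(3) by simp
      then show ?thesis unfolding key_def using nn that by simp
    qed
    have w_eq: "nat \<lfloor>real (qq ?n) * wts y i\<rfloor> = nat \<lfloor>real (qq ?n) * wts x i\<rfloor>" if "i < ?n" for i
    proof -
      have "snd (key y) ! i = snd (key x) ! i" using xy(3) by simp
      then show ?thesis unfolding key_def using nn that by simp
    qed
    have dclose: "dist (emb x i) (emb y i) \<le> r / 2" if "i < ?n" for i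
    proof -
      have "dist (emb x i) (near (emb x i)) < r/4" using near x(3) that by auto
      moreover have "dist (emb y i) (near (emb x i)) < r/4" using near y(2) that emb_eq[OF that] by metis
      ultimately show ?thesis using dist_triangle[of "emb x i" "emb y i" "near (emb x i)"] by (simp add: dist_commute)
    qed
    have wclose: "\<bar>wts x i - wts y i\<bar> \<le> 1 / real (qq ?n)" if "i < ?n" for i
    proof -
      have "\<lfloor>real (qq ?n) * wts y i\<rfloor> = \<lfloor>real (qq ?n) * wts x i\<rfloor>"
        using w_eq[OF that] tx[OF that] ty[OF that] qp by (simp add: nat_eq_iff2)
      then have "\<bar>real (qq ?n) * wts x i - real (qq ?n) * wts y i\<bar> < 1" by linarith
      then have "real (qq ?n) * \<bar>wts x i - wts y i\<bar> < 1" using qp by (simp add: abs_mult right_diff_distrib[symmetric])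
      then show ?thesis using qp by (simp add: field_simps)
    qed
    have "EMD x y \<le> (\<Sum>i<?n. min (wts x i) (wts y i) * dist (emb x i) (emb y i)) + 2 * (\<Sum>i<?n. \<bar>wts x i - wts y i\<bar>)"
    proof (rule same_n_bound[OF x(2) y(1) nn])
      fix i j assume "i < ?n" "j < ?n"
      then have "norm (emb x i) \<le> 1" "norm (emb y j) \<le> 1" using x(3) y(2) by auto
      then show "dist (emb x i) (emb y j) \<le> 2" using norm_triangle_ineq4[of "emb x i" "emb y j"] by (simp add: dist_norm)
    qed
    also have "(\<Sum>i<?n. min (wts x i) (wts y i) * dist (emb x i) (emb y i)) \<le> (\<Sum>i<?n. wts x i * (r / 2))"
      using tx ty dclose by (intro sum_mono mult_mono) auto
    also have "\<dots> = (\<Sum>i<?n. wts x i) * (r / 2)" by (rule sum_distrib_right[symmetric])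
    also have "\<dots> = r / 2" using x(2) unfolding valid_weights_def by simp
    also have "(\<Sum>i<?n. \<bar>wts x i - wts y i\<bar>) \<le> (\<Sum>i<?n. 1 / real (qq ?n))" using wclose by (intro sum_mono) auto
    also have "\<dots> = real ?n / real (qq ?n)" by simp
    also have "\<dots> \<le> r / 4"
    proof -
      have "real ?n * 4 \<le> real (qq ?n) * r" using qpos r by (simp add: field_simps)
      then show ?thesis using qp r by (simp add: field_simps)
    qed
    finally show ?thesis by linarith
  qed
  show ?thesis
  proof (intro exI[of _ N] conjI)
    show "finite N" unfolding N_def using finite_subset[OF _ finKS] keyKS by blast
    show "N \<subseteq> graph_space M" unfolding N_def using chX X_def by auto
    show "\<forall>x\<in>graph_space M. \<exists>y\<in>N. EMD x y \<le> r"
    proof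
      fix x :: "'d graph" assume x: "x \<in> graph_space M"
      then have "ch (key x) \<in> N" unfolding N_def X_def by auto
      moreover have "EMD x (ch (key x)) \<le> r" using close[of x "ch (key x)"] chX[of x] x unfolding X_def by auto
      ultimately show "\<exists>y\<in>N. EMD x y \<le> r" by blast
    qed
    have "card N \<le> card (key ` X)" unfolding N_def by (rule card_image_le) (use finite_subset[OF _ finKS] keyKS in blast)
    also have "\<dots> \<le> card KS" using keyKS finKS by (intro card_mono) auto
    finally show "real (card N) \<le> (\<Sum>n\<in>{1..M}. ((1 + 8 / r) ^ CARD('d) * (3 * (4 / r + 2))) ^ n)"
      using cardKS by linarith
  qed
qed

lemma indep_coords:
  fixes p :: "'a measure" and I :: "'i set"
  assumes p: "prob_space p" and I: "I \<noteq> {}"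
  shows "prob_space.indep_vars (PiM I (\<lambda>_. p)) (\<lambda>_. p) (\<lambda>i ws. ws i) I"
proof -
  interpret PP: prob_space "PiM I (\<lambda>_. p)" by (rule prob_space_PiM) (use p in auto)
  have rv: "(\<lambda>ws. ws i) \<in> measurable (PiM I (\<lambda>_. p)) p" if "i \<in> I" for i
    using measurable_component_singleton[of i I "\<lambda>_. p"] that by simp
  have d1: "distr (PiM I (\<lambda>_. p)) (PiM I (\<lambda>_. p)) (\<lambda>x. \<lambda>i\<in>I. x i) = PiM I (\<lambda>_. p)"
  proof -
    have "distr (PiM I (\<lambda>_. p)) (PiM I (\<lambda>_. p)) (\<lambda>x. \<lambda>i\<in>I. x i) = distr (PiM I (\<lambda>_. p)) (PiM I (\<lambda>_. p)) (\<lambda>x. x)"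
      by (rule distr_cong) (auto simp: space_PiM PiE_def restrict_def extensional_def fun_eq_iff)
    also have "\<dots> = PiM I (\<lambda>_. p)" by (rule distr_id)
    finally show ?thesis .
  qed
  have d2: "PiM I (\<lambda>i. distr (PiM I (\<lambda>_. p)) p (\<lambda>x. x i)) = PiM I (\<lambda>_. p)"
    by (rule PiM_cong) (auto intro: distr_PiM_component p)
  show ?thesis
    by (subst PP.indep_vars_iff_distr_eq_PiM'[OF I rv]) (auto simp: d1 d2)
qed

lemma hoeffding_iid:
  fixes p :: "'a measure" and f :: "'a \<Rightarrow> real" and R :: nat
  assumes p: "prob_space p" and fm: "f \<in> borel_measurable p" and fb: "AE \<omega> in p. f \<omega> \<in> {0..1}"
    and R: "R > 0" and tau: "\<tau> \<ge> 0"
  shows "measure (PiM {..<R} (\<lambda>_. p))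
     {ws \<in> space (PiM {..<R} (\<lambda>_. p)). real R * \<tau> \<le> \<bar>(\<Sum>i<R. f (ws i)) - real R * (\<integral>\<omega>. f \<omega> \<partial>p)\<bar>}
     \<le> 2 * exp (- 2 * real R * \<tau>\<^sup>2)"
proof -
  let ?P = "PiM {..<R} (\<lambda>_. p)"
  interpret PP: prob_space ?P by (rule prob_space_PiM) (use p in auto)
  have I: "{..<R} \<noteq> {}" using R by auto
  define X where "X i ws = f (ws i)" for i :: nat and ws :: "nat \<Rightarrow> 'a"
  have ind: "PP.indep_vars (\<lambda>_. borel) X {..<R}"
    unfolding X_def by (rule PP.indep_vars_compose2[OF indep_coords[OF p I]]) (rule fm)
  have ae: "AE ws in ?P. X i ws \<in> {0..1}" if "i \<in> {..<R}" for i
    unfolding X_def by (rule AE_PiM_component[OF _ that fb]) (rule p)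
  interpret H: Hoeffding_ineq ?P "{..<R}" X "\<lambda>_. 0" "\<lambda>_. 1" "\<Sum>i<R. PP.expectation (X i)"
  proof unfold_locales
    show "finite {..<R}" by simp
    show "PP.indep_vars (\<lambda>_. borel) X {..<R}" by (rule ind)
    fix i :: nat assume "i \<in> {..<R}" then show "AE x in ?P. X i x \<in> {0..1}" by (rule ae)
  qed
  have ex: "PP.expectation (X i) = (\<integral>\<omega>. f \<omega> \<partial>p)" if "i \<in> {..<R}" for i
  proof -
    have "PP.expectation (X i) = integral\<^sup>L (distr ?P p (\<lambda>ws. ws i)) f"
      unfolding X_def using that fm by (subst integral_distr) (auto intro: measurable_component_singleton)
    also have "distr ?P p (\<lambda>ws. ws i) = p" by (rule distr_PiM_component[OF p that])
    finally show ?thesis .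
  qed
  have mu: "(\<Sum>i<R. PP.expectation (\<lambda>a. f (a i))) = real R * (\<integral>\<omega>. f \<omega> \<partial>p)" using ex unfolding X_def by simp
  have "PP.prob {x \<in> space ?P. real R * \<tau> \<le> \<bar>(\<Sum>i<R. X i x) - (\<Sum>i<R. PP.expectation (X i))\<bar>}
        \<le> 2 * exp (-2 * (real R * \<tau>)\<^sup>2 / (\<Sum>i<R. (1 - 0)\<^sup>2))"
    by (rule H.Hoeffding_ineq_abs_ge) (use R tau in auto)
  also have "-2 * (real R * \<tau>)\<^sup>2 / (\<Sum>i<R. (1 - 0::real)\<^sup>2) = - 2 * real R * \<tau>\<^sup>2"
    using R by (simp add: power2_eq_square)
  finally show ?thesis unfolding X_def mu .
qed

lemma exp_lip_aux:
  fixes u v :: real assumes "u \<le> v" "v \<le> 0"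
  shows "exp v - exp u \<le> v - u"
proof -
  have "exp u = exp v * exp (u - v)" by (simp add: exp_diff)
  also have "\<dots> \<ge> exp v * (1 + (u - v))" by (intro mult_left_mono exp_ge_add_one_self) simp
  finally have "exp v - exp u \<le> exp v * (v - u)" by (simp add: algebra_simps)
  also have "\<dots> \<le> 1 * (v - u)" using assms by (intro mult_right_mono) auto
  finally show ?thesis by simp
qed

lemma exp_lip:
  fixes a b g :: real assumes "a \<ge> 0" "b \<ge> 0" "g > 0"
  shows "\<bar>exp (- g * a) - exp (- g * b)\<bar> \<le> g * \<bar>a - b\<bar>"
proof (cases "a \<le> b")
  case True
  have "exp (- g * a) - exp (- g * b) \<le> - g * a - - g * b"
    using True assms by (intro exp_lip_aux) (auto intro: mult_left_mono)
  moreover have "exp (- g * b) \<le> exp (- g * a)" using True assms by (simp add: mult_left_mono)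
  ultimately show ?thesis using True by (simp add: abs_if algebra_simps)
next
  case False
  have "exp (- g * b) - exp (- g * a) \<le> - g * b - - g * a"
    using False assms by (intro exp_lip_aux) (auto intro: mult_left_mono)
  moreover have "exp (- g * a) \<le> exp (- g * b)" using False assms by (simp add: mult_left_mono)
  ultimately show ?thesis using False by (simp add: abs_if algebra_simps)
qed

lemma phi_bounds:
  assumes "valid_weights x" "valid_weights w" "g \<ge> 0"
  shows "0 < phi g w x" "phi g w x \<le> 1"
  using EMD_nonneg[OF assms(1,2)] assms(3) unfolding phi_def by (auto simp: mult_nonneg_nonneg)

lemma prod_lip:
  fixes A B A' B' :: real
  assumes "0 \<le> B" "B \<le> 1" "0 \<le> A'" "A' \<le> 1"
  shows "\<bar>A * B - A' * B'\<bar> \<le> \<bar>A - A'\<bar> + \<bar>B - B'\<bar>"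
proof -
  have "A * B - A' * B' = (A - A') * B + A' * (B - B')" by (simp add: algebra_simps)
  then have "\<bar>A * B - A' * B'\<bar> \<le> \<bar>(A - A') * B\<bar> + \<bar>A' * (B - B')\<bar>"
    by (simp only: abs_triangle_ineq)
  also have "\<bar>(A - A') * B\<bar> = \<bar>A - A'\<bar> * B" using assms by (simp add: abs_mult)
  also have "\<bar>A' * (B - B')\<bar> = A' * \<bar>B - B'\<bar>" using assms by (simp add: abs_mult)
  finally have "\<bar>A * B - A' * B'\<bar> \<le> \<bar>A - A'\<bar> * B + A' * \<bar>B - B'\<bar>" .
  also have "\<dots> \<le> \<bar>A - A'\<bar> * 1 + 1 * \<bar>B - B'\<bar>"
    using assms by (intro add_mono mult_mono) auto
  finally show ?thesis by simp
qed

lemma phi_prod_lip: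
  assumes vx: "valid_weights x" and vx': "valid_weights x'" and vy: "valid_weights y" and vy': "valid_weights y'"
    and g: "g > 0"
  shows "\<bar>phi g w x * phi g w y - phi g w x' * phi g w y'\<bar> \<le> g * (EMD x x' + EMD y y')"
proof (cases "valid_weights w")
  case True
  have "\<bar>phi g w x * phi g w y - phi g w x' * phi g w y'\<bar> \<le> \<bar>phi g w x - phi g w x'\<bar> + \<bar>phi g w y - phi g w y'\<bar>"
    using phi_bounds[OF vy True, of g] phi_bounds[OF vx' True, of g] g by (intro prod_lip) auto
  also have "\<bar>phi g w x - phi g w x'\<bar> \<le> g * \<bar>EMD x w - EMD x' w\<bar>"
    unfolding phi_def using EMD_nonneg[OF vx True] EMD_nonneg[OF vx' True] g by (intro exp_lip) auto
  also have "\<dots> \<le> g * EMD x x'" using EMD_lip[OF vx vx'] g by (intro mult_left_mono) auto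
  also have "\<bar>phi g w y - phi g w y'\<bar> \<le> g * \<bar>EMD y w - EMD y' w\<bar>"
    unfolding phi_def using EMD_nonneg[OF vy True] EMD_nonneg[OF vy' True] g by (intro exp_lip) auto
  also have "\<dots> \<le> g * EMD y y'" using EMD_lip[OF vy vy'] g by (intro mult_left_mono) auto
  finally show ?thesis by (simp add: algebra_simps)
next
  case False
  then show ?thesis
    using EMD_invalid[OF vx False] EMD_invalid[OF vx' False] EMD_invalid[OF vy False] EMD_invalid[OF vy' False]
      EMD_nonneg[OF vx vx'] EMD_nonneg[OF vy vy'] g unfolding phi_def by simp
qed

lemma coord_tendsto:
  fixes f :: "'c \<Rightarrow> ('a \<Rightarrow> 'b::topological_space)"
  assumes "(f \<longlongrightarrow> l) F" shows "((\<lambda>k. f k i) \<longlongrightarrow> l i) F"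
  using continuous_on_tendsto_compose[OF continuous_on_product_coordinates[of i] assms] by simp

lemma graph_parts [simp]: "nnodes (n, z) = n" "emb (n, z) = fst z" "wts (n, z) = snd z"
  by (simp_all add: nnodes_def emb_def wts_def)

lemma EMD_cont_n:
  fixes G :: "'d::finite graph" and n :: nat
  assumes vG: "valid_weights G"
  defines "V \<equiv> {z::(nat \<Rightarrow> real^'d) \<times> (nat \<Rightarrow> real). valid_weights (n, z)}"
  shows "continuous_on V (\<lambda>z. EMD G (n, z))"
proof (rule continuous_on_sequentiallyI)
  fix u :: "nat \<Rightarrow> (nat \<Rightarrow> real^'d) \<times> (nat \<Rightarrow> real)" and z
  assume uV: "\<forall>k. u k \<in> V" and zV: "z \<in> V" and lim: "u \<longlonglongrightarrow> z"
  have vu: "valid_weights (n, u k)" for k using uV unfolding V_def by auto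
  have vz: "valid_weights (n, z)" using zV unfolding V_def by auto
  define D where "D k = (\<Sum>i<n. \<Sum>j<n. dist (fst (u k) i) (fst z j))" for k
  define h where "h k = (\<Sum>i<n. min (snd (u k) i) (snd z i) * dist (fst (u k) i) (fst z i))
       + D k * (\<Sum>i<n. \<bar>snd (u k) i - snd z i\<bar>)" for k
  have bound: "norm (EMD G (n, u k) - EMD G (n, z)) \<le> h k" for k
  proof -
    have "norm (EMD G (n, u k) - EMD G (n, z)) = \<bar>EMD (n, u k) G - EMD (n, z) G\<bar>"
      using EMD_sym[of G "(n, u k)"] EMD_sym[of G "(n, z)"] by simp
    also have "\<dots> \<le> EMD (n, u k) (n, z)" by (rule EMD_lip[OF vu vz])
    also have "\<dots> \<le> h k"
      unfolding h_def
    proof (rule same_n_bound[OF vu vz, simplified])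
      fix i j assume "i < n" "j < n"
      then show "dist (fst (u k) i) (fst z j) \<le> D k"
      proof -
        have "dist (fst (u k) i) (fst z j) \<le> (\<Sum>j<n. dist (fst (u k) i) (fst z j))"
          by (rule member_le_sum) (use \<open>j < n\<close> in auto)
        also have "\<dots> \<le> D k" unfolding D_def
          by (rule member_le_sum[where f = "\<lambda>i. \<Sum>j<n. dist (fst (u k) i) (fst z j)"])
             (use \<open>i < n\<close> in \<open>auto intro: sum_nonneg\<close>)
        finally show ?thesis .
      qed
    qed
    finally show ?thesis .
  qed
  have lf: "((\<lambda>k. fst (u k) i) \<longlongrightarrow> fst z i) sequentially" for i
    by (rule coord_tendsto, rule tendsto_fst[OF lim])
  have ls: "((\<lambda>k. snd (u k) i) \<longlongrightarrow> snd z i) sequentially" for i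
    by (rule coord_tendsto, rule tendsto_snd[OF lim])
  have "h \<longlonglongrightarrow> (\<Sum>i<n. min (snd z i) (snd z i) * dist (fst z i) (fst z i))
       + (\<Sum>i<n. \<Sum>j<n. dist (fst z i) (fst z j)) * (\<Sum>i<n. \<bar>snd z i - snd z i\<bar>)"
    unfolding h_def D_def by (intro tendsto_intros lf ls)
  then have h0: "h \<longlonglongrightarrow> 0" by simp
  have "(\<lambda>k. EMD G (n, u k) - EMD G (n, z)) \<longlonglongrightarrow> 0"
    by (rule Lim_null_comparison[OF always_eventually[OF allI[OF bound]] h0])
  then show "(\<lambda>k. EMD G (n, u k)) \<longlonglongrightarrow> EMD G (n, z)"
    by (rule LIM_zero_cancel)
qed

lemma snd_coord_meas [measurable]:
  "(\<lambda>z::(nat \<Rightarrow> real^'d) \<times> (nat \<Rightarrow> real). snd z i) \<in> borel_measurable borel"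
proof (rule borel_measurable_continuous_onI)
  show "continuous_on UNIV (\<lambda>z::(nat \<Rightarrow> real^'d) \<times> (nat \<Rightarrow> real). snd z i)"
    by (rule continuous_on_compose2[OF continuous_on_product_coordinates continuous_on_snd[OF continuous_on_id]]) simp
qed

lemma EMD_meas_n:
  fixes G :: "'d::finite graph" and n :: nat
  assumes vG: "valid_weights G"
  shows "(\<lambda>z::(nat \<Rightarrow> real^'d) \<times> (nat \<Rightarrow> real). EMD G (n, z)) \<in> borel_measurable borel"
proof -
  define V where "V \<equiv> {z::(nat \<Rightarrow> real^'d) \<times> (nat \<Rightarrow> real). valid_weights (n, z)}"
  have Veq: "V = {z \<in> space borel. (\<forall>i\<in>{..<n}. snd z i \<ge> 0) \<and> (\<Sum>i<n. snd z i) = 1}"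
    unfolding V_def valid_weights_def by auto
  have "V \<in> sets borel" unfolding Veq by measurable
  moreover have cV: "continuous_on V (\<lambda>z. EMD G (n, z))" unfolding V_def by (rule EMD_cont_n[OF vG])
  ultimately have "(\<lambda>z. if z \<in> V then EMD G (n, z) else Inf {}) \<in> borel_measurable borel"
    by (intro borel_measurable_continuous_on_if continuous_on_const)
  moreover have "(\<lambda>z. if z \<in> V then EMD G (n, z) else Inf {}) = (\<lambda>z. EMD G (n, z))"
    using EMD_invalid[OF vG] unfolding V_def by fastforce
  ultimately show ?thesis by simp
qed

lemma sets_rg_space:
  "sets (rg_space :: 'd::finite graph measure) = sets (count_space UNIV \<Otimes>\<^sub>M (borel :: ((nat \<Rightarrow> real^'d) \<times> (nat \<Rightarrow> real)) measure))"
  unfolding rg_space_def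
proof (rule sets_pair_measure_cong[OF refl])
  have "sets (PiM UNIV (\<lambda>_::nat. borel::(real^'d) measure) \<Otimes>\<^sub>M PiM UNIV (\<lambda>_::nat. borel::real measure))
     = sets ((borel::(nat \<Rightarrow> real^'d) measure) \<Otimes>\<^sub>M (borel::(nat \<Rightarrow> real) measure))"
    by (rule sets_pair_measure_cong; rule sets_PiM_equal_borel)
  also have "\<dots> = sets (borel :: ((nat \<Rightarrow> real^'d) \<times> (nat \<Rightarrow> real)) measure)"
    by (simp only: borel_prod)
  finally show "sets (PiM UNIV (\<lambda>_::nat. borel::(real^'d) measure) \<Otimes>\<^sub>M PiM UNIV (\<lambda>_::nat. borel::real measure))
     = sets (borel :: ((nat \<Rightarrow> real^'d) \<times> (nat \<Rightarrow> real)) measure)" .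
qed

lemma EMD_measurable:
  fixes G :: "'d::finite graph"
  assumes vG: "valid_weights G"
  shows "(\<lambda>\<omega>. EMD G \<omega>) \<in> borel_measurable (rg_space :: 'd graph measure)"
proof -
  have "(\<lambda>\<omega>. EMD G \<omega>) \<in> borel_measurable (count_space UNIV \<Otimes>\<^sub>M (borel :: ((nat \<Rightarrow> real^'d) \<times> (nat \<Rightarrow> real)) measure))"
    by (rule measurable_pair_measure_countable1, simp, rule EMD_meas_n[OF vG])
  then show ?thesis by (subst measurable_cong_sets[OF sets_rg_space refl])
qed

lemma gs_valid: "x \<in> graph_space M \<Longrightarrow> valid_weights x"
  unfolding graph_space_def by auto

locale setup_p =
  fixes p :: "'d::finite graph measure" and g :: real and R :: nat
  assumes p: "prob_space p" and sp: "sets p = sets rg_space" and aev: "AE \<omega> in p. valid_weights \<omega>"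
    and g: "g > 0"
begin

abbreviation "PP \<equiv> PiM {..<R} (\<lambda>_. p)"

lemma PP_prob: "prob_space PP" by (rule prob_space_PiM) (use p in auto)

lemma EMD_meas_p: "valid_weights x \<Longrightarrow> (\<lambda>\<omega>. EMD x \<omega>) \<in> borel_measurable p"
  using EMD_measurable[of x] measurable_cong_sets[OF sp refl] by blast

lemma phi_meas: "valid_weights x \<Longrightarrow> (\<lambda>\<omega>. phi g \<omega> x) \<in> borel_measurable p"
  unfolding phi_def using EMD_meas_p by measurable

lemma f_meas: "valid_weights x \<Longrightarrow> valid_weights y \<Longrightarrow> (\<lambda>\<omega>. phi g \<omega> x * phi g \<omega> y) \<in> borel_measurable p"
  using phi_meas by measurable

lemma f_ae:
  assumes vx: "valid_weights x" and vy: "valid_weights y"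
  shows "AE \<omega> in p. phi g \<omega> x * phi g \<omega> y \<in> {0..1}"
proof -
  have g0: "g \<ge> 0" using g by simp
  show ?thesis using aev
  proof eventually_elim
    case (elim \<omega>)
    show ?case using phi_bounds[OF vx elim g0] phi_bounds[OF vy elim g0]
      by (auto intro: mult_le_one)
  qed
qed

lemma f_int: "valid_weights x \<Longrightarrow> valid_weights y \<Longrightarrow> integrable p (\<lambda>\<omega>. phi g \<omega> x * phi g \<omega> y)"
proof -
  assume vx: "valid_weights x" and vy: "valid_weights y"
  interpret prob_space p by (rule p)
  show ?thesis
  proof (rule integrable_const_bound[where B=1])
    show "AE \<omega> in p. norm (phi g \<omega> x * phi g \<omega> y) \<le> 1"
      using f_ae[OF vx vy] by eventually_elim auto
  qed (rule f_meas[OF vx vy])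
qed

lemma kern_lip:
  assumes vx: "valid_weights x" and vx': "valid_weights x'" and vy: "valid_weights y" and vy': "valid_weights y'"
  shows "\<bar>kern p g x y - kern p g x' y'\<bar> \<le> g * (EMD x x' + EMD y y')"
proof -
  interpret prob_space p by (rule p)
  let ?f = "\<lambda>\<omega>. phi g \<omega> x * phi g \<omega> y" and ?f' = "\<lambda>\<omega>. phi g \<omega> x' * phi g \<omega> y'"
  let ?c = "g * (EMD x x' + EMD y y')"
  have b: "\<bar>?f \<omega> - ?f' \<omega>\<bar> \<le> ?c" for \<omega> by (rule phi_prod_lip[OF vx vx' vy vy' g])
  have i1: "integrable p (\<lambda>\<omega>. ?f \<omega> - ?f' \<omega>)" using f_int[OF vx vy] f_int[OF vx' vy'] by auto
  have i2: "integrable p (\<lambda>\<omega>. ?f' \<omega> - ?f \<omega>)" using f_int[OF vx vy] f_int[OF vx' vy'] by auto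
  have e1: "kern p g x y - kern p g x' y' = (\<integral>\<omega>. ?f \<omega> - ?f' \<omega> \<partial>p)"
    unfolding kern_def using f_int[OF vx vy] f_int[OF vx' vy'] by (simp add: integral_diff)
  have e2: "kern p g x' y' - kern p g x y = (\<integral>\<omega>. ?f' \<omega> - ?f \<omega> \<partial>p)"
    unfolding kern_def using f_int[OF vx vy] f_int[OF vx' vy'] by (simp add: integral_diff)
  have "(\<integral>\<omega>. ?f \<omega> - ?f' \<omega> \<partial>p) \<le> ?c"
    by (rule integral_le_const[OF i1]) (use b in \<open>auto simp: abs_le_iff\<close>)
  moreover have "(\<integral>\<omega>. ?f' \<omega> - ?f \<omega> \<partial>p) \<le> ?c"
    by (rule integral_le_const[OF i2]) (use b in \<open>auto simp: abs_le_iff\<close>)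
  ultimately show ?thesis using e1 e2 by linarith
qed

lemma kapprox_lip:
  assumes vx: "valid_weights x" and vx': "valid_weights x'" and vy: "valid_weights y" and vy': "valid_weights y'"
  shows "\<bar>kern_approx R g ws x y - kern_approx R g ws x' y'\<bar> \<le> g * (EMD x x' + EMD y y')"
proof -
  let ?c = "g * (EMD x x' + EMD y y')"
  have c0: "?c \<ge> 0" using g EMD_nonneg[OF vx vx'] EMD_nonneg[OF vy vy'] by simp
  have "kern_approx R g ws x y - kern_approx R g ws x' y'
      = (1 / real R) * (\<Sum>i<R. phi g (ws i) x * phi g (ws i) y - phi g (ws i) x' * phi g (ws i) y')"
    unfolding kern_approx_def by (simp add: sum_subtractf right_diff_distrib)
  then have "\<bar>kern_approx R g ws x y - kern_approx R g ws x' y'\<bar>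
      = (1 / real R) * \<bar>\<Sum>i<R. phi g (ws i) x * phi g (ws i) y - phi g (ws i) x' * phi g (ws i) y'\<bar>"
    by (simp add: abs_mult)
  also have "\<dots> \<le> (1 / real R) * (\<Sum>i<R. ?c)"
    by (intro mult_left_mono order.trans[OF sum_abs] sum_mono phi_prod_lip[OF vx vx' vy vy' g]) auto
  also have "\<dots> \<le> ?c" using c0 by (cases "R = 0") auto
  finally show ?thesis .
qed

lemma delta_lip:
  assumes vx: "valid_weights x" and vx': "valid_weights x'" and vy: "valid_weights y" and vy': "valid_weights y'"
  shows "\<bar>(kern p g x y - kern_approx R g ws x y) - (kern p g x' y' - kern_approx R g ws x' y')\<bar>
     \<le> 2 * g * (EMD x x' + EMD y y')"
  using kern_lip[OF assms] kapprox_lip[OF assms, of ws] by linarith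

lemma kapprox_meas:
  assumes vx: "valid_weights x" and vy: "valid_weights y"
  shows "(\<lambda>ws. kern_approx R g ws x y) \<in> borel_measurable PP"
proof -
  have [measurable]: "(\<lambda>\<omega>. phi g \<omega> x * phi g \<omega> y) \<in> borel_measurable p" by (rule f_meas[OF vx vy])
  show ?thesis unfolding kern_approx_def by measurable
qed

lemma bad_bound:
  assumes vx: "valid_weights x" and vy: "valid_weights y" and R: "R > 0" and tau: "\<tau> \<ge> 0"
  shows "measure PP {ws \<in> space PP. \<tau> \<le> \<bar>kern p g x y - kern_approx R g ws x y\<bar>} \<le> 2 * exp (- 2 * real R * \<tau>\<^sup>2)"
proof -
  let ?f = "\<lambda>\<omega>. phi g \<omega> x * phi g \<omega> y"
  have eq: "{ws \<in> space PP. \<tau> \<le> \<bar>kern p g x y - kern_approx R g ws x y\<bar>}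
      = {ws \<in> space PP. real R * \<tau> \<le> \<bar>(\<Sum>i<R. ?f (ws i)) - real R * (\<integral>\<omega>. ?f \<omega> \<partial>p)\<bar>}"
  proof -
    have "real R * \<bar>kern p g x y - kern_approx R g ws x y\<bar> = \<bar>(\<Sum>i<R. ?f (ws i)) - real R * (\<integral>\<omega>. ?f \<omega> \<partial>p)\<bar>" for ws
    proof -
      have "real R * \<bar>kern p g x y - kern_approx R g ws x y\<bar> = \<bar>real R * (kern p g x y - kern_approx R g ws x y)\<bar>"
        by (simp add: abs_mult)
      also have "real R * (kern p g x y - kern_approx R g ws x y) = real R * kern p g x y - (\<Sum>i<R. ?f (ws i))"
        unfolding kern_approx_def using R by (simp add: right_diff_distrib)
      finally show ?thesis unfolding kern_def by (simp add: abs_minus_commute)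
    qed
    moreover have "(\<tau> \<le> a) = (real R * \<tau> \<le> real R * a)" for a using R by simp
    ultimately show ?thesis by auto
  qed
  show ?thesis unfolding eq
    by (rule hoeffding_iid[OF p f_meas[OF vx vy] f_ae[OF vx vy] R tau])
qed

end

lemma EMD_le_2:
  assumes x: "x \<in> graph_space M" and y: "y \<in> graph_space M'"
  shows "EMD x y \<le> 2"
proof -
  have vx: "valid_weights x" and vy: "valid_weights y" using x y unfolding graph_space_def by auto
  have nx: "\<forall>i<nnodes x. norm (emb x i) \<le> 1" and ny: "\<forall>i<nnodes y. norm (emb y i) \<le> 1"
    using x y unfolding graph_space_def by auto
  have tx: "\<forall>i<nnodes x. wts x i \<ge> 0" "(\<Sum>i<nnodes x. wts x i) = 1" using vx unfolding valid_weights_def by auto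
  have ty: "\<forall>i<nnodes y. wts y i \<ge> 0" "(\<Sum>i<nnodes y. wts y i) = 1" using vy unfolding valid_weights_def by auto
  have "EMD x y \<le> cost x y (prodT x y)" by (rule EMD_le[OF feas_prodT[OF vx vy]])
  also have "\<dots> \<le> (\<Sum>i<nnodes x. \<Sum>j<nnodes y. (wts x i * wts y j) * 2)"
    unfolding cost_def prodT_def
  proof (intro sum_mono)
    fix i j assume i: "i \<in> {..<nnodes x}" and j: "j \<in> {..<nnodes y}"
    have "norm (emb x i) \<le> 1" "norm (emb y j) \<le> 1" using nx ny i j by auto
    then have "dist (emb x i) (emb y j) \<le> 2"
      using norm_triangle_ineq4[of "emb x i" "emb y j"] by (simp add: dist_norm)
    then show "(if i < nnodes x \<and> j < nnodes y then wts x i * wts y j else 0) * dist (emb x i) (emb y j)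
        \<le> wts x i * wts y j * 2" using i j tx ty by (auto intro!: mult_left_mono)
  qed
  also have "\<dots> = 2" using tx ty by (simp add: sum_distrib_left[symmetric] sum_distrib_right[symmetric])
  finally show ?thesis .
qed

lemma sum_pow_le:
  fixes A :: real assumes A: "A \<ge> 1"
  shows "(\<Sum>n\<in>{1..M}. A ^ n) \<le> (2 * A) ^ M"
proof -
  have "(\<Sum>n\<in>{1..M}. A ^ n) \<le> (\<Sum>n\<in>{1..M}. A ^ M)"
    using A by (intro sum_mono power_increasing) auto
  also have "\<dots> = real M * A ^ M" by simp
  also have "\<dots> \<le> 2 ^ M * A ^ M"
  proof (rule mult_right_mono)
    have "M < 2 ^ M" by (rule less_exp)
    then show "real M \<le> 2 ^ M" by (metis less_imp_le of_nat_le_iff of_nat_numeral of_nat_power)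
  qed (use A in simp)
  also have "\<dots> = (2 * A) ^ M" by (simp add: power_mult_distrib)
  finally show ?thesis .
qed

lemma arith_key:
  fixes b :: real and d :: nat assumes b: "b \<ge> 3/2" and d: "d \<ge> 1"
  shows "2 * ((1 + 16 * b) ^ d * (3 * (8 * b + 2))) \<le> (1 + b) ^ (12 * d)"
proof -
  define c where "c = 1 + b"
  have c: "c \<ge> 5/2" using b unfolding c_def by simp
  have h1: "(1 + 16 * b) ^ d \<le> (16 * c) ^ d" using b unfolding c_def by (intro power_mono) auto
  have h2: "3 * (8 * b + 2) \<le> 24 * c" unfolding c_def by simp
  have "(1 + 16 * b) ^ d * (3 * (8 * b + 2)) \<le> (16 * c) ^ d * (24 * c)"
    by (rule mult_mono[OF h1 h2]) (use c b in auto)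
  then have "2 * ((1 + 16 * b) ^ d * (3 * (8 * b + 2))) \<le> 2 * ((16 * c) ^ d * (24 * c))"
    by (rule mult_left_mono) simp
  also have "(16 * c) ^ d = 16 ^ d * c ^ d" by (rule power_mult_distrib)
  also have "2 * (16 ^ d * c ^ d * (24 * c)) = (48 * 16 ^ d) * c ^ (d + 1)"
    by (simp add: power_add mult_ac)
  also have "48 * 16 ^ d \<le> c ^ (10 * d)"
  proof -
    have "(48::real) * 16 ^ d \<le> 48 ^ d * 16 ^ d"
      using d by (intro mult_right_mono) (auto simp: power_increasing[of 1 d "48::real", simplified])
    also have "\<dots> = 768 ^ d" by (simp add: power_mult_distrib[symmetric])
    also have "\<dots> \<le> ((5/2) ^ 10) ^ d" by (intro power_mono) (simp_all add: power_divide)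
    also have "\<dots> \<le> (c ^ 10) ^ d" using c by (intro power_mono) auto
    also have "\<dots> = c ^ (10 * d)" by (simp add: power_mult)
    finally show ?thesis .
  qed
  also have "c ^ (10 * d) * c ^ (d + 1) = c ^ (11 * d + 1)" by (simp add: power_add[symmetric])
  also have "\<dots> \<le> c ^ (12 * d)" using d c by (intro power_increasing) auto
  finally show ?thesis using c unfolding c_def by (simp add: mult_right_mono)
qed

context setup_p
begin

definition Ev :: "nat \<Rightarrow> real \<Rightarrow> (nat \<Rightarrow> 'd graph) set" where
  "Ev M \<epsilon> = {ws \<in> space PP. \<forall>x\<in>graph_space M. \<forall>y\<in>graph_space M.
       \<bar>kern p g x y - kern_approx R g ws x y\<bar> \<le> \<epsilon>}"

lemma pred_dev:
  assumes vx: "valid_weights x" and vy: "valid_weights y"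
  shows "{ws \<in> space PP. \<bar>kern p g x y - kern_approx R g ws x y\<bar> \<le> c} \<in> sets PP"
    and "{ws \<in> space PP. c \<le> \<bar>kern p g x y - kern_approx R g ws x y\<bar>} \<in> sets PP"
proof -
  have [measurable]: "(\<lambda>ws. kern_approx R g ws x y) \<in> borel_measurable PP" by (rule kapprox_meas[OF vx vy])
  show "{ws \<in> space PP. \<bar>kern p g x y - kern_approx R g ws x y\<bar> \<le> c} \<in> sets PP" by measurable
  show "{ws \<in> space PP. c \<le> \<bar>kern p g x y - kern_approx R g ws x y\<bar>} \<in> sets PP" by measurable
qed

lemma Ev_sets: "Ev M \<epsilon> \<in> sets PP"
proof -
  define P where "P m N \<longleftrightarrow> finite N \<and> N \<subseteq> graph_space M \<and>
     (\<forall>x\<in>graph_space M. \<exists>y\<in>N. EMD x y \<le> 1 / real (Suc m))" for m and N :: "'d graph set"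
  have ex: "\<exists>N. P m N" for m
  proof -
    have "1 / real (Suc m) > 0" by simp
    from graph_net[OF this, of M] show ?thesis unfolding P_def by blast
  qed
  define Nt where "Nt m = (SOME N. P m N)" for m
  have PN: "P m (Nt m)" for m unfolding Nt_def by (rule someI_ex[OF ex])
  have Nt: "\<And>m. finite (Nt m)" "\<And>m. Nt m \<subseteq> graph_space M"
    "\<And>m x. x \<in> graph_space M \<Longrightarrow> \<exists>y\<in>Nt m. EMD x y \<le> 1 / real (Suc m)"
    using PN unfolding P_def by blast+
  let ?D = "\<lambda>ws x y. kern p g x y - kern_approx R g ws x y"
  have eq: "Ev M \<epsilon> = {ws \<in> space PP. \<forall>m. \<forall>x\<in>Nt m. \<forall>y\<in>Nt m. \<bar>?D ws x y\<bar> \<le> \<epsilon> + 4 * g / real (Suc m)}"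
  proof (intro equalityI subsetI)
    fix ws assume ws: "ws \<in> Ev M \<epsilon>"
    have "\<bar>?D ws x y\<bar> \<le> \<epsilon> + 4 * g / real (Suc m)" if "x \<in> Nt m" "y \<in> Nt m" for m x y
    proof -
      have "\<bar>?D ws x y\<bar> \<le> \<epsilon>" using ws that Nt(2) unfolding Ev_def by blast
      moreover have "4 * g / real (Suc m) \<ge> 0" using g by simp
      ultimately show ?thesis by linarith
    qed
    then show "ws \<in> {ws \<in> space PP. \<forall>m. \<forall>x\<in>Nt m. \<forall>y\<in>Nt m. \<bar>?D ws x y\<bar> \<le> \<epsilon> + 4 * g / real (Suc m)}"
      using ws unfolding Ev_def by auto
  next
    fix ws assume ws: "ws \<in> {ws \<in> space PP. \<forall>m. \<forall>x\<in>Nt m. \<forall>y\<in>Nt m. \<bar>?D ws x y\<bar> \<le> \<epsilon> + 4 * g / real (Suc m)}"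
    have "\<bar>?D ws x y\<bar> \<le> \<epsilon>" if x: "x \<in> graph_space M" and y: "y \<in> graph_space M" for x y
    proof (rule field_le_epsilon)
      fix e :: real assume e: "e > 0"
      obtain m where m: "inverse (real (Suc m)) < e / (8 * g)"
        using reals_Archimedean[of "e / (8 * g)"] e g by auto
      obtain x' where x': "x' \<in> Nt m" "EMD x x' \<le> 1 / real (Suc m)" using Nt(3)[OF x] by blast
      obtain y' where y': "y' \<in> Nt m" "EMD y y' \<le> 1 / real (Suc m)" using Nt(3)[OF y] by blast
      have vx: "valid_weights x" "valid_weights x'" "valid_weights y" "valid_weights y'"
        using x y x'(1) y'(1) Nt(2) gs_valid by blast+
      have "\<bar>?D ws x y - ?D ws x' y'\<bar> \<le> 2 * g * (EMD x x' + EMD y y')"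
        by (rule delta_lip[OF vx])
      also have "\<dots> \<le> 2 * g * (1 / real (Suc m) + 1 / real (Suc m))"
        using g x'(2) y'(2) by (intro mult_left_mono add_mono) auto
      finally have 1: "\<bar>?D ws x y - ?D ws x' y'\<bar> \<le> 4 * g / real (Suc m)" by simp
      have 2: "\<bar>?D ws x' y'\<bar> \<le> \<epsilon> + 4 * g / real (Suc m)" using ws x'(1) y'(1) by auto
      have "8 * g / real (Suc m) < e"
      proof -
        have "8 * g * inverse (real (Suc m)) < 8 * g * (e / (8 * g))" using m g by (intro mult_strict_left_mono) auto
        then show ?thesis using g by (simp add: field_simps)
      qed
      then show "\<bar>?D ws x y\<bar> \<le> \<epsilon> + e" using 1 2 by linarith
    qed
    then show "ws \<in> Ev M \<epsilon>" using ws unfolding Ev_def by auto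
  qed
  have "Measurable.pred PP (\<lambda>ws. \<forall>m. \<forall>x\<in>Nt m. \<forall>y\<in>Nt m. \<bar>?D ws x y\<bar> \<le> \<epsilon> + 4 * g / real (Suc m))"
  proof (intro pred_intros_countable(1) pred_intros_finite(3) Nt(1))
    fix m x y assume "x \<in> Nt m" "y \<in> Nt m"
    then have "{ws \<in> space PP. \<bar>?D ws x y\<bar> \<le> \<epsilon> + 4 * g / real (Suc m)} \<in> sets PP"
      using Nt(2) gs_valid by (intro pred_dev(1)) blast+
    then show "Measurable.pred PP (\<lambda>ws. \<bar>?D ws x y\<bar> \<le> \<epsilon> + 4 * g / real (Suc m))"
      unfolding pred_def .
  qed
  then have "{ws \<in> space PP. \<forall>m. \<forall>x\<in>Nt m. \<forall>y\<in>Nt m. \<bar>?D ws x y\<bar> \<le> \<epsilon> + 4 * g / real (Suc m)} \<in> sets PP"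
    unfolding pred_def .
  then show ?thesis unfolding eq .
qed

lemma main_bound:
  fixes Nt :: "'d graph set"
  assumes R: "R > 0" and Nf: "finite Nt" and NX: "Nt \<subseteq> graph_space M"
    and cov: "\<And>x. x \<in> graph_space M \<Longrightarrow> \<exists>y\<in>Nt. EMD x y \<le> r" and r0: "r \<ge> 0" and re: "4 * g * r < \<epsilon>"
  shows "measure PP (Ev M \<epsilon>) \<ge> 1 - real (card Nt) ^ 2 * (2 * exp (- 2 * real R * (\<epsilon> - 4 * g * r)\<^sup>2))"
proof -
  interpret PP: prob_space PP by (rule PP_prob)
  let ?D = "\<lambda>ws x y. kern p g x y - kern_approx R g ws x y"
  define \<tau> where "\<tau> = \<epsilon> - 4 * g * r"
  have tau: "\<tau> \<ge> 0" using re unfolding \<tau>_def by simp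
  define Bad where "Bad xy = {ws \<in> space PP. \<tau> \<le> \<bar>?D ws (fst xy) (snd xy)\<bar>}" for xy :: "'d graph \<times> 'd graph"
  have vN: "valid_weights x" if "x \<in> Nt" for x using that NX gs_valid by blast
  have Bsets: "Bad xy \<in> sets PP" if "xy \<in> Nt \<times> Nt" for xy
    unfolding Bad_def using that vN by (intro pred_dev(2)) auto
  have sub: "space PP - Ev M \<epsilon> \<subseteq> (\<Union>xy\<in>Nt \<times> Nt. Bad xy)"
  proof
    fix ws assume ws: "ws \<in> space PP - Ev M \<epsilon>"
    then obtain x y where x: "x \<in> graph_space M" and y: "y \<in> graph_space M" and big: "\<bar>?D ws x y\<bar> > \<epsilon>"
      unfolding Ev_def by force
    obtain x' where x': "x' \<in> Nt" "EMD x x' \<le> r" using cov[OF x] by blast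
    obtain y' where y': "y' \<in> Nt" "EMD y y' \<le> r" using cov[OF y] by blast
    have vx: "valid_weights x" "valid_weights x'" "valid_weights y" "valid_weights y'"
      using x y vN x'(1) y'(1) gs_valid by blast+
    have "\<bar>?D ws x y - ?D ws x' y'\<bar> \<le> 2 * g * (EMD x x' + EMD y y')" by (rule delta_lip[OF vx])
    also have "\<dots> \<le> 2 * g * (r + r)" using g x'(2) y'(2) by (intro mult_left_mono add_mono) auto
    also have "2 * g * (r + r) = 4 * g * r" by simp
    finally have "\<tau> \<le> \<bar>?D ws x' y'\<bar>" using big unfolding \<tau>_def by linarith
    then have "ws \<in> Bad (x', y')" using ws unfolding Bad_def by auto
    then show "ws \<in> (\<Union>xy\<in>Nt \<times> Nt. Bad xy)" using x'(1) y'(1) by blast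
  qed
  have "measure PP (space PP - Ev M \<epsilon>) \<le> measure PP (\<Union>xy\<in>Nt \<times> Nt. Bad xy)"
    using Bsets Nf by (intro PP.finite_measure_mono[OF sub]) auto
  also have "\<dots> \<le> (\<Sum>xy\<in>Nt \<times> Nt. measure PP (Bad xy))"
    using Bsets Nf by (intro PP.finite_measure_subadditive_finite) auto
  also have "\<dots> \<le> (\<Sum>xy\<in>Nt \<times> Nt. 2 * exp (- 2 * real R * \<tau>\<^sup>2))"
  proof (rule sum_mono)
    fix xy assume "xy \<in> Nt \<times> Nt"
    then show "measure PP (Bad xy) \<le> 2 * exp (- 2 * real R * \<tau>\<^sup>2)"
      unfolding Bad_def using vN by (intro bad_bound R tau) auto
  qed
  also have "\<dots> = real (card Nt) ^ 2 * (2 * exp (- 2 * real R * \<tau>\<^sup>2))"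
    by (simp add: card_cartesian_product power2_eq_square)
  finally have "measure PP (space PP - Ev M \<epsilon>) \<le> real (card Nt) ^ 2 * (2 * exp (- 2 * real R * \<tau>\<^sup>2))" .
  moreover have "measure PP (space PP - Ev M \<epsilon>) = 1 - measure PP (Ev M \<epsilon>)"
    by (rule PP.prob_compl[OF Ev_sets])
  ultimately show ?thesis unfolding \<tau>_def by linarith
qed

end

lemma x0_in: "((1::nat), (\<lambda>_. 0::real^'d::finite), (\<lambda>_. 1::real)) \<in> graph_space M" if "M \<ge> 1"
  using that unfolding graph_space_def valid_weights_def by simp

lemma second_part:
  fixes B \<epsilon> \<delta> :: real and n R :: nat
  assumes B: "B \<ge> 1" and e: "\<epsilon> > 0" and d: "0 < \<delta>"
    and h: "real R \<ge> (8 / \<epsilon>\<^sup>2) * (real n * ln B + ln (2 / \<delta>))"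
  shows "2 * B ^ n * exp (- real R * \<epsilon>\<^sup>2 / 8) \<le> \<delta>"
proof -
  have "real R * \<epsilon>\<^sup>2 / 8 \<ge> real n * ln B + ln (2 / \<delta>)"
  proof -
    have "real R * (\<epsilon>\<^sup>2 / 8) \<ge> (8 / \<epsilon>\<^sup>2) * (real n * ln B + ln (2 / \<delta>)) * (\<epsilon>\<^sup>2 / 8)"
      using h e by (intro mult_right_mono) auto
    also have "(8 / \<epsilon>\<^sup>2) * (real n * ln B + ln (2 / \<delta>)) * (\<epsilon>\<^sup>2 / 8) = real n * ln B + ln (2 / \<delta>)"
      using e by (simp add: field_simps)
    finally show ?thesis by simp
  qed
  then have "exp (real n * ln B + ln (2 / \<delta>)) \<le> exp (real R * \<epsilon>\<^sup>2 / 8)" by simp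
  moreover have "exp (real n * ln B + ln (2 / \<delta>)) = B ^ n * (2 / \<delta>)"
    using B d by (simp add: exp_add exp_of_nat_mult)
  ultimately have "B ^ n * (2 / \<delta>) \<le> exp (real R * \<epsilon>\<^sup>2 / 8)" by simp
  then have "2 * B ^ n \<le> \<delta> * exp (real R * \<epsilon>\<^sup>2 / 8)" using d by (simp add: field_simps)
  then have "2 * B ^ n / exp (real R * \<epsilon>\<^sup>2 / 8) \<le> \<delta>" by (simp add: divide_le_eq)
  moreover have "exp (- real R * \<epsilon>\<^sup>2 / 8) = 1 / exp (real R * \<epsilon>\<^sup>2 / 8)"
    by (simp add: exp_minus[symmetric] exp_minus_inverse field_simps)
  ultimately show ?thesis by simp
qed

lemma final_arith:
  fixes K c w :: real
  assumes K: "K \<ge> 1" and c: "0 \<le> c" "c \<le> K ^ 6" and w: "w \<ge> 0" and small: "2 * K * exp (- w) \<le> 1"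
  shows "c ^ 2 * (2 * exp (- 12 * w)) \<le> 2 * K * exp (- w)"
proof -
  let ?q = "K * exp (- w)"
  have q0: "0 \<le> ?q" "?q \<le> 1" using K small by auto
  have "c ^ 2 \<le> (K ^ 6) ^ 2" using c by (intro power_mono) auto
  then have "c ^ 2 * exp (- 12 * w) \<le> K ^ 12 * exp (- 12 * w)"
    by (intro mult_right_mono) (auto simp: power_mult[symmetric])
  also have "K ^ 12 * exp (- 12 * w) = ?q ^ 12"
    by (simp add: power_mult_distrib exp_of_nat_mult[symmetric])
  also have "\<dots> \<le> ?q ^ 1" using q0 by (intro power_decreasing) auto
  finally show ?thesis by simp
qed

theorem theorem4p3:
  fixes p :: "'d::finite graph measure"
    and M Dmax R :: nat and \<gamma> \<epsilon> :: real
  assumes "M \<ge> 1" and "Dmax \<ge> 1" and "\<gamma> > 0" and "\<epsilon> > 0"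
    and "prob_space p" and "sets p = sets rg_space"
    and "AE \<omega> in p. \<omega> \<in> random_graphs Dmax"
  shows "measure (PiM {..<R} (\<lambda>_. p))
           {ws \<in> space (PiM {..<R} (\<lambda>_. p)).
              \<forall>Gx\<in>graph_space M. \<forall>Gy\<in>graph_space M.
                \<bar>kern p \<gamma> Gx Gy - kern_approx R \<gamma> ws Gx Gy\<bar> \<le> \<epsilon>}
         \<ge> 1 - 2 * (1 + 16 * \<gamma> / \<epsilon>) ^ (2 * CARD('d) * M) * exp (- real R * \<epsilon>\<^sup>2 / 8)
      \<and> (\<forall>\<delta>. 0 < \<delta> \<and> \<delta> < 1 \<and>
            real R \<ge> (8 / \<epsilon>\<^sup>2) * (2 * real (CARD('d)) * real M * ln (1 + 16 * \<gamma> / \<epsilon>) + ln (2 / \<delta>))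
          \<longrightarrow> measure (PiM {..<R} (\<lambda>_. p))
               {ws \<in> space (PiM {..<R} (\<lambda>_. p)).
                  \<forall>Gx\<in>graph_space M. \<forall>Gy\<in>graph_space M.
                    \<bar>kern p \<gamma> Gx Gy - kern_approx R \<gamma> ws Gx Gy\<bar> \<le> \<epsilon>} \<ge> 1 - \<delta>)"

proof -
  let ?PP = "PiM {..<R} (\<lambda>_. p)"
  have aev: "AE \<omega> in p. valid_weights \<omega>" using assms(7) by eventually_elim (simp add: random_graphs_def)
  interpret S: setup_p p \<gamma> R by (rule setup_p.intro[OF assms(5) assms(6) aev assms(3)])
  define d where "d = CARD('d)"
  define B where "B = 1 + 16 * \<gamma> / \<epsilon>"
  define E where "E = {ws \<in> space ?PP. \<forall>Gx\<in>graph_space M. \<forall>Gy\<in>graph_space M.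
                \<bar>kern p \<gamma> Gx Gy - kern_approx R \<gamma> ws Gx Gy\<bar> \<le> \<epsilon>}"
  have EE: "E = S.Ev M \<epsilon>" unfolding E_def S.Ev_def ..
  have g: "\<gamma> > 0" and e: "\<epsilon> > 0" and M1: "M \<ge> 1" using assms by auto
  have B1: "B \<ge> 1" unfolding B_def using g e by simp
  have d1: "d \<ge> 1" unfolding d_def by (simp add: Suc_le_eq)
  have Kge: "B ^ (2 * d * M) \<ge> 1" using B1 by simp
  have first: "measure ?PP E \<ge> 1 - 2 * B ^ (2 * d * M) * exp (- real R * \<epsilon>\<^sup>2 / 8)"
  proof (cases "2 * B ^ (2 * d * M) * exp (- real R * \<epsilon>\<^sup>2 / 8) \<le> 1")
    case False
    then show ?thesis using measure_nonneg[of ?PP E] by linarith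
  next
    case small: True
    have R: "R > 0"
    proof (rule ccontr)
      assume "\<not> R > 0" then have "R = 0" by simp
      then show False using small Kge by simp
    qed
    define w where "w = real R * \<epsilon>\<^sup>2 / 8"
    have w0: "w \<ge> 0" unfolding w_def by simp
    have ew: "exp (- real R * \<epsilon>\<^sup>2 / 8) = exp (- w)" unfolding w_def by simp
    show ?thesis
    proof (cases "16 * \<gamma> / \<epsilon> \<le> 3/2")
      case True
      define x0 :: "'d graph" where "x0 = (1, (\<lambda>_. 0), (\<lambda>_. 1))"
      have x0: "x0 \<in> graph_space M" unfolding x0_def by (rule x0_in[OF M1])
      have g8: "8 * \<gamma> \<le> 3 * \<epsilon> / 4" using True e by (simp add: field_simps)
      have mb: "measure ?PP (S.Ev M \<epsilon>) \<ge> 1 - real (card {x0}) ^ 2 * (2 * exp (- 2 * real R * (\<epsilon> - 4 * \<gamma> * 2)\<^sup>2))"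
      proof (rule S.main_bound[OF R])
        show "\<And>x. x \<in> graph_space M \<Longrightarrow> \<exists>y\<in>{x0}. EMD x y \<le> 2" using EMD_le_2[OF _ x0] by blast
        show "4 * \<gamma> * 2 < \<epsilon>" using g8 e by simp
      qed (use x0 in auto)
      have "(\<epsilon> / 4)\<^sup>2 \<le> (\<epsilon> - 4 * \<gamma> * 2)\<^sup>2" using g8 e by (intro power_mono) auto
      then have "w \<le> 2 * real R * (\<epsilon> - 4 * \<gamma> * 2)\<^sup>2"
        unfolding w_def using mult_left_mono[of "(\<epsilon> / 4)\<^sup>2" "(\<epsilon> - 4 * \<gamma> * 2)\<^sup>2" "2 * real R"]
        by (simp add: power_divide)
      then have "exp (- 2 * real R * (\<epsilon> - 4 * \<gamma> * 2)\<^sup>2) \<le> exp (- w)" by simp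
      also have "\<dots> \<le> B ^ (2 * d * M) * exp (- w)" using Kge by simp
      finally show ?thesis using mb EE ew by simp
    next
      case False
      define b where "b = 16 * \<gamma> / \<epsilon>"
      have b: "b \<ge> 3/2" using False unfolding b_def by simp
      define r where "r = \<epsilon> / (32 * \<gamma>)"
      have r: "r > 0" unfolding r_def using g e by simp
      have r8: "8 / r = 16 * b" and r4: "4 / r = 8 * b" unfolding r_def b_def using g e by (simp_all add: field_simps)
      have gr: "4 * \<gamma> * r = \<epsilon> / 8" unfolding r_def using g by (simp add: field_simps)
      obtain Nt :: "'d graph set" where Nt: "finite Nt" "Nt \<subseteq> graph_space M"
        "\<forall>x\<in>graph_space M. \<exists>y\<in>Nt. EMD x y \<le> r"
        "real (card Nt) \<le> (\<Sum>n\<in>{1..M}. ((1 + 8 / r) ^ CARD('d) * (3 * (4 / r + 2))) ^ n)"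
        using graph_net[OF r, of M] by blast
      define A where "A = (1 + 16 * b) ^ d * (3 * (8 * b + 2))"
      have A1: "A \<ge> 1"
      proof -
        have "(1 + 16 * b) ^ d \<ge> 1" using b by simp
        moreover have "3 * (8 * b + 2) \<ge> 1" using b by simp
        ultimately show ?thesis unfolding A_def using mult_mono[of 1 "(1 + 16 * b) ^ d" 1 "3 * (8 * b + 2)"] by simp
      qed
      have "real (card Nt) \<le> (\<Sum>n\<in>{1..M}. A ^ n)" using Nt(4) unfolding A_def d_def r8 r4 .
      also have "\<dots> \<le> (2 * A) ^ M" by (rule sum_pow_le[OF A1])
      also have "\<dots> \<le> ((1 + b) ^ (12 * d)) ^ M"
        using arith_key[OF b d1] A1 unfolding A_def by (intro power_mono) auto
      also have "\<dots> = (B ^ (2 * d * M)) ^ 6" unfolding B_def b_def by (simp add: power_mult[symmetric] mult_ac)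
      finally have cN: "real (card Nt) \<le> (B ^ (2 * d * M)) ^ 6" .
      have mb: "measure ?PP (S.Ev M \<epsilon>) \<ge> 1 - real (card Nt) ^ 2 * (2 * exp (- 2 * real R * (\<epsilon> - 4 * \<gamma> * r)\<^sup>2))"
        by (rule S.main_bound[OF R Nt(1,2)]) (use Nt(3) r gr e in auto)
      have "exp (- 2 * real R * (\<epsilon> - 4 * \<gamma> * r)\<^sup>2) \<le> exp (- 12 * w)"
      proof -
        have "(\<epsilon> - 4 * \<gamma> * r)\<^sup>2 = (49/64) * \<epsilon>\<^sup>2" unfolding gr by (simp add: power2_eq_square field_simps)
        then have eq2: "2 * real R * (\<epsilon> - 4 * \<gamma> * r)\<^sup>2 = (49/32) * (real R * \<epsilon>\<^sup>2)" by simp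
        have eq3: "12 * w = (3/2) * (real R * \<epsilon>\<^sup>2)" unfolding w_def by simp
        have "real R * \<epsilon>\<^sup>2 \<ge> 0" by simp
        then have "12 * w \<le> 2 * real R * (\<epsilon> - 4 * \<gamma> * r)\<^sup>2" using eq2 eq3 by linarith
        then show ?thesis by simp
      qed
      then have "real (card Nt) ^ 2 * (2 * exp (- 2 * real R * (\<epsilon> - 4 * \<gamma> * r)\<^sup>2))
          \<le> real (card Nt) ^ 2 * (2 * exp (- 12 * w))" by (intro mult_left_mono) auto
      also have "\<dots> \<le> 2 * B ^ (2 * d * M) * exp (- w)"
        by (rule final_arith[OF Kge _ cN w0]) (use small ew in auto)
      finally show ?thesis using mb EE ew by simp
    qed
  qed
  have second: "measure ?PP E \<ge> 1 - \<delta>"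
    if "0 < \<delta> \<and> \<delta> < 1 \<and> real R \<ge> (8 / \<epsilon>\<^sup>2) * (2 * real (CARD('d)) * real M * ln (1 + 16 * \<gamma> / \<epsilon>) + ln (2 / \<delta>))" for \<delta>
  proof -
    have h: "real R \<ge> (8 / \<epsilon>\<^sup>2) * (real (2 * d * M) * ln B + ln (2 / \<delta>))"
      using that unfolding B_def d_def by simp
    have "2 * B ^ (2 * d * M) * exp (- real R * \<epsilon>\<^sup>2 / 8) \<le> \<delta>"
      by (rule second_part[OF B1 e _ h]) (use that in auto)
    then show ?thesis using first by linarith
  qed
  show ?thesis using first second unfolding E_def B_def d_def by blast
qed

end
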